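(* Let $(X,\oplus,\odot,d)$ be any one of the spaces listed in the context and $\|x\|_{\mathcal F}=d(\tilde0,x)$. (i) If $A:X\to\mathbb{R}$ is linear (i.e. $A(x\oplus y)=A(x)+A(y)$ and $A(\lambda\odot x)=\lambda A(x)$ for all $x,y\in X$, $\lambda\in\mathbb{R}$), then $A$ is continuous at $\tilde0$ if and only if there exists $M>0$ with $|A(x)|\le M\|x\|_{\mathcal F}$ for all $x\in X$. (ii) If $A:X\to X$ is linear (i.e. $A(x\oplus y)=A(x)\oplus A(y)$ and $A(\lambda\odot x)=\lambda\odot A(x)$ for all $x,y\in X$, $\lambda\in\mathbb{R}$), then $A$ is continuous at $\tilde0$ if and only if there exists $M>0$ with $\|A(x)\|_{\mathcal F}\le M\|x\|_{\mathcal F}$ for all $x\in X$.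
   Context: A fuzzy number is a function $u:\mathbb{R}\to[0,1]$ which is normal, fuzzy convex, upper semicontinuous, with $\overline{\{u>0\}}$ compact; $\mathbb{R}_{\mathcal F}$ is the set of fuzzy numbers. Level sets $[u]^r=[u_-(r),u_+(r)]$; $[u\oplus v]^r=[u]^r+[v]^r$, $[\lambda\odot u]^r=\lambda[u]^r$, $\tilde0=\chi_{\{0\}}$; $D(u,v)=\sup_{r\in[0,1]}\max\{|u_-(r)-v_-(r)|,|u_+(r)-v_+(r)|\}$. The admissible spaces $(X,\oplus,\odot,d)$ (operations pointwise/componentwise) are: $(\mathbb{R}_{\mathcal F},D)$; $C([a,b];\mathbb{R}_{\mathcal F})$ with $D^*(f,g)=\sup_xD(f(x),g(x))$; $L^p([a,b];\mathbb{R}_{\mathcal F})$, $1\le p<\infty$, with $D_p(f,g)=(\int_a^bD(f(x),g(x))^pdx)^{1/p}$; $C^p([a,b];\mathbb{R}_{\mathcal F})$, $p\in\mathbb{N}$ ($p$ times (Hukuhara or generalized, all of the same kind) differentiable with continuous $p$-th derivative) with $D_p^*(f,g)=\sum_{i=0}^pD^*(f^{(i)},g^{(i)})$; $l^p_{\mathbb{R}_{\mathcal F}}$ ($p\ge1$) with $\rho_p(x,y)=(\sum_nD(x_n,y_n)^p)^{1/p}$; $m_{\mathbb{R}_{\mathcal F}}$ (bounded sequences), $c_{\mathbb{R}_{\mathcal F}}$ (convergent sequences), $c^{\tilde0}_{\mathbb{R}_{\mathcal F}}$ (sequences tending to $\tilde0$) with $\mu(x,y)=\sup_nD(x_n,y_n)$;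 and finite Cartesian products of these with the max metric. *)

theory Defs
  imports "HOL-Analysis.Analysis"
begin

definition fuzzy_number :: "(real \<Rightarrow> real) \<Rightarrow> bool" where
  "fuzzy_number u \<longleftrightarrow>
     (\<forall>x. 0 \<le> u x \<and> u x \<le> 1) \<and>
     (\<exists>x. u x = 1) \<and>
     (\<forall>x y t. 0 \<le> t \<and> t \<le> 1 \<longrightarrow> min (u x) (u y) \<le> u (t * x + (1 - t) * y)) \<and>
     (\<forall>x. \<forall>e>0. \<exists>d>0. \<forall>y. \<bar>y - x\<bar> < d \<longrightarrow> u y < u x + e) \<and>
     compact (closure {x. u x > 0})"

definition level :: "(real \<Rightarrow> real) \<Rightarrow> real \<Rightarrow> real set" where
  "level u r = (if r = 0 then closure {x. u x > 0} else {x. u x \<ge> r})"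

definition lo :: "(real \<Rightarrow> real) \<Rightarrow> real \<Rightarrow> real" where
  "lo u r = Inf (level u r)"

definition up :: "(real \<Rightarrow> real) \<Rightarrow> real \<Rightarrow> real" where
  "up u r = Sup (level u r)"

definition fD :: "(real \<Rightarrow> real) \<Rightarrow> (real \<Rightarrow> real) \<Rightarrow> real" where
  "fD u v = (SUP r\<in>{0..1}. max \<bar>lo u r - lo v r\<bar> \<bar>up u r - up v r\<bar>)"

definition fzero :: "real \<Rightarrow> real" where
  "fzero = (\<lambda>x. if x = 0 then 1 else 0)"

text \<open>Addition by Zadeh's extension principle (equivalently [u+v]^r = [u]^r + [v]^r).\<close>
definition fadd :: "(real \<Rightarrow> real) \<Rightarrow> (real \<Rightarrow> real) \<Rightarrow> (real \<Rightarrow> real)" where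
  "fadd u v = (\<lambda>x. SUP y. min (u y) (v (x - y)))"

text \<open>Scalar multiplication (equivalently [c u]^r = c [u]^r).\<close>
definition fsmul :: "real \<Rightarrow> (real \<Rightarrow> real) \<Rightarrow> (real \<Rightarrow> real)" where
  "fsmul c u = (if c = 0 then fzero else (\<lambda>x. u (x / c)))"

text \<open>Elements of C([a,b]) etc. are functions real => fuzzy, normalised to the fuzzy
  zero outside [a,b].\<close>

definition fcont_space :: "real \<Rightarrow> real \<Rightarrow> (real \<Rightarrow> real \<Rightarrow> real) set" where
  "fcont_space a b = {f. (\<forall>x\<in>{a..b}. fuzzy_number (f x)) \<and> (\<forall>x. x \<notin> {a..b} \<longrightarrow> f x = fzero) \<and>
     (\<forall>x\<in>{a..b}. \<forall>e>0. \<exists>d>0. \<forall>y\<in>{a..b}. \<bar>y - x\<bar> < d \<longrightarrow> fD (f y) (f x) < e)}"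

definition fDstar :: "real \<Rightarrow> real \<Rightarrow> (real \<Rightarrow> real \<Rightarrow> real) \<Rightarrow> (real \<Rightarrow> real \<Rightarrow> real) \<Rightarrow> real" where
  "fDstar a b f g = (SUP x\<in>{a..b}. fD (f x) (g x))"

definition hdiff_exists :: "(real \<Rightarrow> real) \<Rightarrow> (real \<Rightarrow> real) \<Rightarrow> bool" where
  "hdiff_exists u v \<longleftrightarrow> (\<exists>w. fuzzy_number w \<and> u = fadd v w)"

definition hdiff :: "(real \<Rightarrow> real) \<Rightarrow> (real \<Rightarrow> real) \<Rightarrow> (real \<Rightarrow> real)" where
  "hdiff u v = (SOME w. fuzzy_number w \<and> u = fadd v w)"

definition rquot_ok :: "bool \<Rightarrow> (real \<Rightarrow> real \<Rightarrow> real) \<Rightarrow> real \<Rightarrow> real \<Rightarrow> bool" where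
  "rquot_ok s f x h = (if s then hdiff_exists (f (x + h)) (f x) else hdiff_exists (f x) (f (x + h)))"

definition rquot :: "bool \<Rightarrow> (real \<Rightarrow> real \<Rightarrow> real) \<Rightarrow> real \<Rightarrow> real \<Rightarrow> (real \<Rightarrow> real)" where
  "rquot s f x h = (if s then fsmul (1 / h) (hdiff (f (x + h)) (f x))
                         else fsmul (- 1 / h) (hdiff (f x) (f (x + h))))"

definition lquot_ok :: "bool \<Rightarrow> (real \<Rightarrow> real \<Rightarrow> real) \<Rightarrow> real \<Rightarrow> real \<Rightarrow> bool" where
  "lquot_ok s f x h = (if s then hdiff_exists (f x) (f (x - h)) else hdiff_exists (f (x - h)) (f x))"

definition lquot :: "bool \<Rightarrow> (real \<Rightarrow> real \<Rightarrow> real) \<Rightarrow> real \<Rightarrow> real \<Rightarrow> (real \<Rightarrow> real)" where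
  "lquot s f x h = (if s then fsmul (1 / h) (hdiff (f x) (f (x - h)))
                         else fsmul (- 1 / h) (hdiff (f (x - h)) (f x)))"

text \<open>f has derivative L at x (relative to [a,b], one-sided at the end points), using the
  quotient types s (right) and s' (left). (True,True) is the Hukuhara derivative; the four
  choices of (s,s') are the four cases of Bede--Gal generalized differentiability.\<close>
definition has_fderiv_case ::
  "bool \<Rightarrow> bool \<Rightarrow> real \<Rightarrow> real \<Rightarrow> (real \<Rightarrow> real \<Rightarrow> real) \<Rightarrow> (real \<Rightarrow> real) \<Rightarrow> real \<Rightarrow> bool" where
  "has_fderiv_case s s' a b f L x \<longleftrightarrow> fuzzy_number L \<and>
     (\<exists>d>0. \<forall>h. 0 < h \<and> h < d \<longrightarrow>
        (x + h \<le> b \<longrightarrow> rquot_ok s f x h) \<and> (a \<le> x - h \<longrightarrow> lquot_ok s' f x h)) \<and>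
     ((\<lambda>h. fD (rquot s f x h) L) \<longlongrightarrow> 0) (at 0 within {h. 0 < h \<and> x + h \<le> b}) \<and>
     ((\<lambda>h. fD (lquot s' f x h) L) \<longlongrightarrow> 0) (at 0 within {h. 0 < h \<and> a \<le> x - h})"

text \<open>Kind: True = Hukuhara differentiability, False = generalized differentiability.\<close>
definition has_fderiv :: "bool \<Rightarrow> real \<Rightarrow> real \<Rightarrow> (real \<Rightarrow> real \<Rightarrow> real) \<Rightarrow> (real \<Rightarrow> real) \<Rightarrow> real \<Rightarrow> bool" where
  "has_fderiv hk a b f L x \<longleftrightarrow>
     (if hk then has_fderiv_case True True a b f L x else (\<exists>s s'. has_fderiv_case s s' a b f L x))"

definition fderiv_fun :: "bool \<Rightarrow> real \<Rightarrow> real \<Rightarrow> (real \<Rightarrow> real \<Rightarrow> real) \<Rightarrow> (real \<Rightarrow> real \<Rightarrow> real)" where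
  "fderiv_fun hk a b f = (\<lambda>x. if x \<in> {a..b} then (SOME L. has_fderiv hk a b f L x) else fzero)"

definition fderivs :: "bool \<Rightarrow> real \<Rightarrow> real \<Rightarrow> nat \<Rightarrow> (real \<Rightarrow> real \<Rightarrow> real) \<Rightarrow> (real \<Rightarrow> real \<Rightarrow> real)" where
  "fderivs hk a b i f = (fderiv_fun hk a b ^^ i) f"

definition fCp_space :: "nat \<Rightarrow> bool \<Rightarrow> real \<Rightarrow> real \<Rightarrow> (real \<Rightarrow> real \<Rightarrow> real) set" where
  "fCp_space p hk a b = {f. f \<in> fcont_space a b \<and>
      (\<forall>i<p. \<forall>x\<in>{a..b}. \<exists>L. has_fderiv hk a b (fderivs hk a b i f) L x) \<and>
      fderivs hk a b p f \<in> fcont_space a b}"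

definition fDpstar :: "nat \<Rightarrow> bool \<Rightarrow> real \<Rightarrow> real \<Rightarrow> (real \<Rightarrow> real \<Rightarrow> real) \<Rightarrow> (real \<Rightarrow> real \<Rightarrow> real) \<Rightarrow> real" where
  "fDpstar p hk a b f g = (\<Sum>i\<le>p. fDstar a b (fderivs hk a b i f) (fderivs hk a b i g))"

definition fLp_fun :: "real \<Rightarrow> real \<Rightarrow> real \<Rightarrow> (real \<Rightarrow> real \<Rightarrow> real) set" where
  "fLp_fun a b p = {f. (\<forall>x\<in>{a..b}. fuzzy_number (f x)) \<and> (\<forall>x. x \<notin> {a..b} \<longrightarrow> f x = fzero) \<and>
      (\<forall>r\<in>{0..1}. (\<lambda>x. lo (f x) r) \<in> borel_measurable lborel \<and> (\<lambda>x. up (f x) r) \<in> borel_measurable lborel) \<and>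
      (\<integral>\<^sup>+ x. indicator {a..b} x * ennreal (fD (f x) fzero powr p) \<partial>lborel) < \<infinity>}"

definition fDp_fun :: "real \<Rightarrow> real \<Rightarrow> real \<Rightarrow> (real \<Rightarrow> real \<Rightarrow> real) \<Rightarrow> (real \<Rightarrow> real \<Rightarrow> real) \<Rightarrow> real" where
  "fDp_fun a b p f g =
     enn2real (\<integral>\<^sup>+ x. indicator {a..b} x * ennreal (fD (f x) (g x) powr p) \<partial>lborel) powr (1 / p)"

definition fLp_class :: "real \<Rightarrow> real \<Rightarrow> real \<Rightarrow> (real \<Rightarrow> real \<Rightarrow> real) \<Rightarrow> (real \<Rightarrow> real \<Rightarrow> real) set" where
  "fLp_class a b p f = {g \<in> fLp_fun a b p. AE x in lborel. x \<in> {a..b} \<longrightarrow> g x = f x}"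

definition fLp_space :: "real \<Rightarrow> real \<Rightarrow> real \<Rightarrow> (real \<Rightarrow> real \<Rightarrow> real) set set" where
  "fLp_space a b p = fLp_class a b p ` fLp_fun a b p"

definition rep :: "'a set \<Rightarrow> 'a" where
  "rep F = (SOME f. f \<in> F)"

definition flp_space :: "real \<Rightarrow> (nat \<Rightarrow> real \<Rightarrow> real) set" where
  "flp_space p = {x. (\<forall>n. fuzzy_number (x n)) \<and> summable (\<lambda>n. fD (x n) fzero powr p)}"

definition frho :: "real \<Rightarrow> (nat \<Rightarrow> real \<Rightarrow> real) \<Rightarrow> (nat \<Rightarrow> real \<Rightarrow> real) \<Rightarrow> real" where
  "frho p x y = (\<Sum>n. fD (x n) (y n) powr p) powr (1 / p)"

definition fm_space :: "(nat \<Rightarrow> real \<Rightarrow> real) set" where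
  "fm_space = {x. (\<forall>n. fuzzy_number (x n)) \<and> (\<exists>B. \<forall>n. fD (x n) fzero \<le> B)}"

definition fc_space :: "(nat \<Rightarrow> real \<Rightarrow> real) set" where
  "fc_space = {x. (\<forall>n. fuzzy_number (x n)) \<and>
      (\<exists>L. fuzzy_number L \<and> (\<lambda>n. fD (x n) L) \<longlonglongrightarrow> 0)}"

definition fc0_space :: "(nat \<Rightarrow> real \<Rightarrow> real) set" where
  "fc0_space = {x. (\<forall>n. fuzzy_number (x n)) \<and> (\<lambda>n. fD (x n) fzero) \<longlonglongrightarrow> 0}"

definition fmu :: "(nat \<Rightarrow> real \<Rightarrow> real) \<Rightarrow> (nat \<Rightarrow> real \<Rightarrow> real) \<Rightarrow> real" where
  "fmu x y = (SUP n. fD (x n) (y n))"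

datatype felem =
    FNum (fnum: "real \<Rightarrow> real")
  | FFun (ffun: "real \<Rightarrow> real \<Rightarrow> real")
  | FCls (fcls: "(real \<Rightarrow> real \<Rightarrow> real) set")
  | FSeq (fseq: "nat \<Rightarrow> real \<Rightarrow> real")

text \<open>Base spaces: R_F; C([a,b]); L^p([a,b]) (params a b p); C^p([a,b]) (params p, kind
  (True = Hukuhara, False = generalized), a, b); l^p; m; c; c^0.\<close>
datatype bspace =
    SpRF
  | SpC real real
  | SpLp real real real
  | SpCp nat bool real real
  | Splp real
  | Spm
  | Spc
  | Spc0

fun bvalid :: "bspace \<Rightarrow> bool" where
  "bvalid SpRF = True"
| "bvalid (SpC a b) = (a < b)"
| "bvalid (SpLp a b p) = (a < b \<and> 1 \<le> p)"
| "bvalid (SpCp p hk a b) = (a < b)"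
| "bvalid (Splp p) = (1 \<le> p)"
| "bvalid Spm = True"
| "bvalid Spc = True"
| "bvalid Spc0 = True"

fun bcarrier :: "bspace \<Rightarrow> felem set" where
  "bcarrier SpRF = FNum ` {u. fuzzy_number u}"
| "bcarrier (SpC a b) = FFun ` fcont_space a b"
| "bcarrier (SpLp a b p) = FCls ` fLp_space a b p"
| "bcarrier (SpCp p hk a b) = FFun ` fCp_space p hk a b"
| "bcarrier (Splp p) = FSeq ` flp_space p"
| "bcarrier Spm = FSeq ` fm_space"
| "bcarrier Spc = FSeq ` fc_space"
| "bcarrier Spc0 = FSeq ` fc0_space"

fun badd :: "bspace \<Rightarrow> felem \<Rightarrow> felem \<Rightarrow> felem" where
  "badd SpRF x y = FNum (fadd (fnum x) (fnum y))"
| "badd (SpC a b) x y = FFun (\<lambda>t. fadd (ffun x t) (ffun y t))"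
| "badd (SpLp a b p) x y = FCls (fLp_class a b p (\<lambda>t. fadd (rep (fcls x) t) (rep (fcls y) t)))"
| "badd (SpCp p hk a b) x y = FFun (\<lambda>t. fadd (ffun x t) (ffun y t))"
| "badd (Splp p) x y = FSeq (\<lambda>n. fadd (fseq x n) (fseq y n))"
| "badd Spm x y = FSeq (\<lambda>n. fadd (fseq x n) (fseq y n))"
| "badd Spc x y = FSeq (\<lambda>n. fadd (fseq x n) (fseq y n))"
| "badd Spc0 x y = FSeq (\<lambda>n. fadd (fseq x n) (fseq y n))"

fun bsmul :: "bspace \<Rightarrow> real \<Rightarrow> felem \<Rightarrow> felem" where
  "bsmul SpRF c x = FNum (fsmul c (fnum x))"
| "bsmul (SpC a b) c x = FFun (\<lambda>t. fsmul c (ffun x t))"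
| "bsmul (SpLp a b p) c x = FCls (fLp_class a b p (\<lambda>t. fsmul c (rep (fcls x) t)))"
| "bsmul (SpCp p hk a b) c x = FFun (\<lambda>t. fsmul c (ffun x t))"
| "bsmul (Splp p) c x = FSeq (\<lambda>n. fsmul c (fseq x n))"
| "bsmul Spm c x = FSeq (\<lambda>n. fsmul c (fseq x n))"
| "bsmul Spc c x = FSeq (\<lambda>n. fsmul c (fseq x n))"
| "bsmul Spc0 c x = FSeq (\<lambda>n. fsmul c (fseq x n))"

fun bzero :: "bspace \<Rightarrow> felem" where
  "bzero SpRF = FNum fzero"
| "bzero (SpC a b) = FFun (\<lambda>t. fzero)"
| "bzero (SpLp a b p) = FCls (fLp_class a b p (\<lambda>t. fzero))"
| "bzero (SpCp p hk a b) = FFun (\<lambda>t. fzero)"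
| "bzero (Splp p) = FSeq (\<lambda>n. fzero)"
| "bzero Spm = FSeq (\<lambda>n. fzero)"
| "bzero Spc = FSeq (\<lambda>n. fzero)"
| "bzero Spc0 = FSeq (\<lambda>n. fzero)"

fun bdist :: "bspace \<Rightarrow> felem \<Rightarrow> felem \<Rightarrow> real" where
  "bdist SpRF x y = fD (fnum x) (fnum y)"
| "bdist (SpC a b) x y = fDstar a b (ffun x) (ffun y)"
| "bdist (SpLp a b p) x y = fDp_fun a b p (rep (fcls x)) (rep (fcls y))"
| "bdist (SpCp p hk a b) x y = fDpstar p hk a b (ffun x) (ffun y)"
| "bdist (Splp p) x y = frho p (fseq x) (fseq y)"
| "bdist Spm x y = fmu (fseq x) (fseq y)"
| "bdist Spc x y = fmu (fseq x) (fseq y)"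
| "bdist Spc0 x y = fmu (fseq x) (fseq y)"

text \<open>An admissible space is a finite (nonempty) Cartesian product of base spaces, given by a
  list of base spaces; elements are lists of components; max metric.\<close>
definition valid_spec :: "bspace list \<Rightarrow> bool" where
  "valid_spec S \<longleftrightarrow> S \<noteq> [] \<and> (\<forall>b\<in>set S. bvalid b)"

definition Xcarrier :: "bspace list \<Rightarrow> felem list set" where
  "Xcarrier S = {xs. length xs = length S \<and> (\<forall>i<length S. xs ! i \<in> bcarrier (S ! i))}"

definition Xadd :: "bspace list \<Rightarrow> felem list \<Rightarrow> felem list \<Rightarrow> felem list" where
  "Xadd S xs ys = map (\<lambda>i. badd (S ! i) (xs ! i) (ys ! i)) [0..<length S]"

definition Xsmul :: "bspace list \<Rightarrow> real \<Rightarrow> felem list \<Rightarrow> felem list" where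
  "Xsmul S c xs = map (\<lambda>i. bsmul (S ! i) c (xs ! i)) [0..<length S]"

definition Xzero :: "bspace list \<Rightarrow> felem list" where
  "Xzero S = map bzero S"

definition Xdist :: "bspace list \<Rightarrow> felem list \<Rightarrow> felem list \<Rightarrow> real" where
  "Xdist S xs ys = Max ((\<lambda>i. bdist (S ! i) (xs ! i) (ys ! i)) ` {..<length S})"

definition Xnorm :: "bspace list \<Rightarrow> felem list \<Rightarrow> real" where
  "Xnorm S x = Xdist S (Xzero S) x"

definition lin_functional :: "bspace list \<Rightarrow> (felem list \<Rightarrow> real) \<Rightarrow> bool" where
  "lin_functional S A \<longleftrightarrow>
     (\<forall>x\<in>Xcarrier S. \<forall>y\<in>Xcarrier S. A (Xadd S x y) = A x + A y) \<and>
     (\<forall>c. \<forall>x\<in>Xcarrier S. A (Xsmul S c x) = c * A x)"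

definition lin_operator :: "bspace list \<Rightarrow> (felem list \<Rightarrow> felem list) \<Rightarrow> bool" where
  "lin_operator S A \<longleftrightarrow> (\<forall>x\<in>Xcarrier S. A x \<in> Xcarrier S) \<and>
     (\<forall>x\<in>Xcarrier S. \<forall>y\<in>Xcarrier S. A (Xadd S x y) = Xadd S (A x) (A y)) \<and>
     (\<forall>c. \<forall>x\<in>Xcarrier S. A (Xsmul S c x) = Xsmul S c (A x))"

definition cont0_functional :: "bspace list \<Rightarrow> (felem list \<Rightarrow> real) \<Rightarrow> bool" where
  "cont0_functional S A \<longleftrightarrow> (\<forall>e>0. \<exists>d>0. \<forall>x\<in>Xcarrier S.
      Xdist S (Xzero S) x < d \<longrightarrow> \<bar>A x - A (Xzero S)\<bar> < e)"

definition cont0_operator :: "bspace list \<Rightarrow> (felem list \<Rightarrow> felem list) \<Rightarrow> bool" where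
  "cont0_operator S A \<longleftrightarrow> (\<forall>e>0. \<exists>d>0. \<forall>x\<in>Xcarrier S.
      Xdist S (Xzero S) x < d \<longrightarrow> Xdist S (A (Xzero S)) (A x) < e)"

end

theory Submission
  imports Defs
begin


lemma fz_range: "fuzzy_number u \<Longrightarrow> 0 \<le> u x \<and> u x \<le> 1"
  unfolding fuzzy_number_def by blast

lemma fz_closed_ge: assumes "fuzzy_number u" shows "closed {x. r \<le> u x}"
proof -
  have usc: "\<And>x e. e > 0 \<Longrightarrow> \<exists>d>0. \<forall>y. \<bar>y - x\<bar> < d \<longrightarrow> u y < u x + e"
    using assms unfolding fuzzy_number_def by blast
  have "open {x. u x < r}"
    unfolding open_dist
  proof safe
    fix x assume "u x < r"
    then obtain d where d: "d > 0" "\<forall>y. \<bar>y - x\<bar> < d \<longrightarrow> u y < u x + (r - u x)"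
      using usc[of "r - u x" x] by auto
    show "\<exists>e>0. \<forall>y. dist y x < e \<longrightarrow> y \<in> {x. u x < r}"
      using d by (auto simp: dist_real_def)
  qed
  moreover have "{x. r \<le> u x} = - {x. u x < r}" by auto
  ultimately show ?thesis by (simp add: closed_def)
qed

lemma fz_compact_supp: "fuzzy_number u \<Longrightarrow> compact (closure {x. u x > 0})"
  unfolding fuzzy_number_def by blast

lemma fz_normal: "fuzzy_number u \<Longrightarrow> \<exists>x. u x = 1"
  unfolding fuzzy_number_def by blast

lemma fz_convex: "fuzzy_number u \<Longrightarrow> 0 \<le> t \<Longrightarrow> t \<le> 1 \<Longrightarrow> min (u x) (u y) \<le> u (t * x + (1 - t) * y)"
  unfolding fuzzy_number_def by blast

lemma level_compact:
  assumes "fuzzy_number u" "r \<in> {0..1}" shows "compact (level u r)"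
proof (cases "r = 0")
  case True thus ?thesis using fz_compact_supp[OF assms(1)] by (simp add: level_def)
next
  case False
  hence "level u r = closure {x. u x > 0} \<inter> {x. r \<le> u x}"
    using assms(2) closure_subset by (force simp: level_def)
  thus ?thesis using fz_compact_supp[OF assms(1)] fz_closed_ge[OF assms(1)]
    by (simp add: compact_Int_closed)
qed

lemma level_nonempty:
  assumes "fuzzy_number u" "r \<in> {0..1}" shows "level u r \<noteq> {}"
proof -
  obtain x where x: "u x = 1" using fz_normal[OF assms(1)] by blast
  show ?thesis
  proof (cases "r = 0")
    case True
    have "x \<in> closure {x. u x > 0}" using x closure_subset by force
    moreover have "level u r = closure {x. u x > 0}" using True by (simp add: level_def)
    ultimately show ?thesis by blast
  next
    case False
    have "x \<in> {x. r \<le> u x}" using x assms(2) by simp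
    moreover have "level u r = {x. r \<le> u x}" using False by (simp add: level_def)
    ultimately show ?thesis by blast
  qed
qed

lemma level_sub0:
  assumes "fuzzy_number u" "r \<in> {0..1}" shows "level u r \<subseteq> level u 0"
proof (cases "r = 0")
  case False
  have "{x. r \<le> u x} \<subseteq> {x. 0 < u x}" using False assms(2) by auto
  hence "{x. r \<le> u x} \<subseteq> closure {x. 0 < u x}" using closure_subset by blast
  thus ?thesis using False by (simp add: level_def)
next
  case True then show ?thesis by simp
qed

lemma lo_props:
  assumes "fuzzy_number u" "r \<in> {0..1}"
  shows "lo u r \<in> level u r" "\<And>x. x \<in> level u r \<Longrightarrow> lo u r \<le> x"
    "up u r \<in> level u r" "\<And>x. x \<in> level u r \<Longrightarrow> x \<le> up u r"
proof -
  have c: "compact (level u r)" and ne: "level u r \<noteq> {}"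
    using level_compact[OF assms] level_nonempty[OF assms] by auto
  have b: "bounded (level u r)" using c compact_imp_bounded by blast
  have cl: "closed (level u r)" using c compact_imp_closed by blast
  show "lo u r \<in> level u r" unfolding lo_def
    by (rule closed_contains_Inf[OF ne bounded_imp_bdd_below[OF b] cl])
  show "up u r \<in> level u r" unfolding up_def
    by (rule closed_contains_Sup[OF ne bounded_imp_bdd_above[OF b] cl])
  fix x assume "x \<in> level u r"
  thus "lo u r \<le> x" unfolding lo_def by (rule cInf_lower[OF _ bounded_imp_bdd_below[OF b]])
  show "x \<le> up u r" using \<open>x \<in> level u r\<close> unfolding up_def
    by (rule cSup_upper[OF _ bounded_imp_bdd_above[OF b]])
qed

lemma lo_bounds:
  assumes "fuzzy_number u" "r \<in> {0..1}"
  shows "lo u 0 \<le> lo u r" "up u r \<le> up u 0" "lo u r \<le> up u r"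
proof -
  have z: "(0::real) \<in> {0..1}" by simp
  show "lo u 0 \<le> lo u r" using lo_props(2)[OF assms(1) z] lo_props(1)[OF assms] level_sub0[OF assms] by blast
  show "up u r \<le> up u 0" using lo_props(4)[OF assms(1) z] lo_props(3)[OF assms] level_sub0[OF assms] by blast
  show "lo u r \<le> up u r" using lo_props[OF assms] by blast
qed

definition fB :: "(real \<Rightarrow> real) \<Rightarrow> real" where "fB u = \<bar>lo u 0\<bar> + \<bar>up u 0\<bar>"

lemma lo_abs_bound:
  assumes "fuzzy_number u" "r \<in> {0..1}"
  shows "\<bar>lo u r\<bar> \<le> fB u" "\<bar>up u r\<bar> \<le> fB u"
  using lo_bounds[OF assms] unfolding fB_def by auto

lemma level_interval:
  assumes "fuzzy_number u" "r \<in> {0<..1}"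
  shows "level u r = {lo u r..up u r}"
proof
  have r: "r \<in> {0..1}" using assms by auto
  show "level u r \<subseteq> {lo u r..up u r}" using lo_props[OF assms(1) r] by auto
  show "{lo u r..up u r} \<subseteq> level u r"
  proof
    fix x assume x: "x \<in> {lo u r..up u r}"
    have a: "r \<le> u (lo u r)" "r \<le> u (up u r)" using lo_props(1,3)[OF assms(1) r] assms(2)
      by (auto simp: level_def)
    show "x \<in> level u r"
    proof (cases "lo u r = up u r")
      case True thus ?thesis using x lo_props(1)[OF assms(1) r] by auto
    next
      case False
      hence lt: "lo u r < up u r" using lo_bounds(3)[OF assms(1) r] by auto
      define t where "t = (up u r - x) / (up u r - lo u r)"
      have t: "0 \<le> t" "t \<le> 1" using x lt by (auto simp: t_def field_simps)
      have "t * (up u r - lo u r) = up u r - x" using lt by (simp add: t_def)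
      hence "t * lo u r + (1 - t) * up u r = x" by (simp add: algebra_simps)
      hence "min (u (lo u r)) (u (up u r)) \<le> u x" using fz_convex[OF assms(1) t, of "lo u r" "up u r"] by simp
      thus ?thesis using a assms(2) by (auto simp: level_def)
    qed
  qed
qed

lemma fz_eq_levels:
  assumes "fuzzy_number u" "fuzzy_number v"
    "\<And>r. r \<in> {0<..1} \<Longrightarrow> lo u r = lo v r \<and> up u r = up v r"
  shows "u = v"
proof
  have L: "\<And>r. r \<in> {0<..1} \<Longrightarrow> {x. r \<le> u x} = {x. r \<le> v x}"
  proof -
    fix r :: real assume r: "r \<in> {0<..1}"
    have "level u r = level v r" using level_interval[OF assms(1) r] level_interval[OF assms(2) r] assms(3)[OF r] by simp
    thus "{x. r \<le> u x} = {x. r \<le> v x}" using r by (simp add: level_def)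
  qed
  fix x
  show "u x = v x"
  proof (rule ccontr)
    assume ne: "u x \<noteq> v x"
    show False
    proof (cases "u x < v x")
      case True
      hence "v x \<in> {0<..1}" using fz_range[OF assms(1), of x] fz_range[OF assms(2), of x] by auto
      from L[OF this] have "v x \<le> u x" by blast
      thus False using True by simp
    next
      case False
      hence "u x \<in> {0<..1}" using ne fz_range[OF assms(1), of x] fz_range[OF assms(2), of x] by auto
      from L[OF this] have "u x \<le> v x" by blast
      thus False using False ne by simp
    qed
  qed
qed

lemma fD_bdd:
  assumes "fuzzy_number u" "fuzzy_number v"
  shows "bdd_above ((\<lambda>r. max \<bar>lo u r - lo v r\<bar> \<bar>up u r - up v r\<bar>) ` {0..1})"
proof (rule bdd_aboveI2)
  fix r :: real assume r: "r \<in> {0..1}"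
  show "max \<bar>lo u r - lo v r\<bar> \<bar>up u r - up v r\<bar> \<le> fB u + fB v"
  proof -
    note a = lo_abs_bound[OF assms(1) r] lo_abs_bound[OF assms(2) r]
    have "\<bar>lo u r - lo v r\<bar> \<le> fB u + fB v"
      by (rule order_trans[OF abs_triangle_ineq4 add_mono[OF a(1) a(3)]])
    moreover have "\<bar>up u r - up v r\<bar> \<le> fB u + fB v"
      by (rule order_trans[OF abs_triangle_ineq4 add_mono[OF a(2) a(4)]])
    ultimately show ?thesis by simp
  qed
qed

lemma fD_ge:
  assumes "fuzzy_number u" "fuzzy_number v" "r \<in> {0..1}"
  shows "max \<bar>lo u r - lo v r\<bar> \<bar>up u r - up v r\<bar> \<le> fD u v"
  unfolding fD_def by (rule cSUP_upper[OF assms(3) fD_bdd[OF assms(1,2)]])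

lemma fD_le:
  assumes "\<And>r. r \<in> {0..1} \<Longrightarrow> max \<bar>lo u r - lo v r\<bar> \<bar>up u r - up v r\<bar> \<le> K"
  shows "fD u v \<le> K"
  unfolding fD_def by (rule cSUP_least) (use assms in auto)

lemma fD_nonneg: assumes "fuzzy_number u" "fuzzy_number v" shows "0 \<le> fD u v"
proof -
  have "max \<bar>lo u 0 - lo v 0\<bar> \<bar>up u 0 - up v 0\<bar> \<le> fD u v" by (rule fD_ge[OF assms]) simp
  moreover have "0 \<le> max \<bar>lo u 0 - lo v 0\<bar> \<bar>up u 0 - up v 0\<bar>" by simp
  ultimately show ?thesis by linarith
qed

lemma fD_sym: "fD u v = fD v u"
  unfolding fD_def by (simp add: abs_minus_commute)

lemma fD_tri:
  assumes "fuzzy_number u" "fuzzy_number v" "fuzzy_number w"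
  shows "fD u w \<le> fD u v + fD v w"
proof (rule fD_le)
  fix r :: real assume r: "r \<in> {0..1}"
  have 1: "\<bar>lo u r - lo v r\<bar> \<le> fD u v" "\<bar>up u r - up v r\<bar> \<le> fD u v"
    using fD_ge[OF assms(1,2) r] by auto
  have 2: "\<bar>lo v r - lo w r\<bar> \<le> fD v w" "\<bar>up v r - up w r\<bar> \<le> fD v w"
    using fD_ge[OF assms(2,3) r] by auto
  have "\<bar>lo u r - lo w r\<bar> \<le> fD u v + fD v w" using 1 2 by linarith
  moreover have "\<bar>up u r - up w r\<bar> \<le> fD u v + fD v w" using 1 2 by linarith
  ultimately show "max \<bar>lo u r - lo w r\<bar> \<bar>up u r - up w r\<bar> \<le> fD u v + fD v w" by simp
qed

lemma fD_zero_eq: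
  assumes "fuzzy_number u" "fuzzy_number v" "fD u v \<le> 0"
  shows "u = v"
proof (rule fz_eq_levels[OF assms(1,2)])
  fix r :: real assume "r \<in> {0<..1}"
  hence "r \<in> {0..1}" by auto
  from fD_ge[OF assms(1,2) this] have "\<bar>lo u r - lo v r\<bar> \<le> fD u v" "\<bar>up u r - up v r\<bar> \<le> fD u v" by simp_all
  hence "\<bar>lo u r - lo v r\<bar> \<le> 0" "\<bar>up u r - up v r\<bar> \<le> 0" using assms(3) by linarith+
  thus "lo u r = lo v r \<and> up u r = up v r" by simp
qed

lemma fD_self: "fD u u = 0"
  unfolding fD_def by simp



lemma sup_scale:
  fixes f :: "'a \<Rightarrow> real"
  assumes "c > 0" "I \<noteq> {}" "bdd_above (f ` I)"
  shows "(SUP i\<in>I. c * f i) = c * (SUP i\<in>I. f i)"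
proof (rule antisym)
  show "(SUP i\<in>I. c * f i) \<le> c * (SUP i\<in>I. f i)"
  proof (rule cSUP_least[OF assms(2)])
    fix i assume "i \<in> I"
    hence "f i \<le> (SUP i\<in>I. f i)" by (rule cSUP_upper[OF _ assms(3)])
    thus "c * f i \<le> c * (SUP i\<in>I. f i)" using assms(1) by (simp add: mult_left_mono)
  qed
  have b2: "bdd_above ((\<lambda>i. c * f i) ` I)"
  proof -
    obtain M where "\<forall>i\<in>I. f i \<le> M" using assms(3) by (auto simp: bdd_above_def)
    hence "\<forall>i\<in>I. c * f i \<le> c * M" using assms(1) by (auto intro!: mult_left_mono)
    thus ?thesis by (auto simp: bdd_above_def)
  qed
  have "(SUP i\<in>I. f i) \<le> (SUP i\<in>I. c * f i) / c"
  proof (rule cSUP_least[OF assms(2)])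
    fix i assume "i \<in> I"
    hence "c * f i \<le> (SUP i\<in>I. c * f i)" by (rule cSUP_upper[OF _ b2])
    thus "f i \<le> (SUP i\<in>I. c * f i) / c" using assms(1) by (simp add: field_simps)
  qed
  thus "c * (SUP i\<in>I. f i) \<le> (SUP i\<in>I. c * f i)" using assms(1) by (simp add: field_simps)
qed

lemma fsmul_fzero: "fsmul c fzero = fzero"
  by (auto simp: fsmul_def fzero_def fun_eq_iff)

lemma fzero_fuzzy: "fuzzy_number fzero"
proof -
  have "{x. fzero x > 0} = {0}" by (auto simp: fzero_def)
  moreover have "\<forall>x. \<forall>e>0. \<exists>d>0. \<forall>y. \<bar>y - x\<bar> < d \<longrightarrow> fzero y < fzero x + e"
  proof (intro allI impI)
    fix x e :: real assume e: "e > 0"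
    show "\<exists>d>0. \<forall>y. \<bar>y - x\<bar> < d \<longrightarrow> fzero y < fzero x + e"
    proof (cases "x = 0")
      case True thus ?thesis using e by (intro exI[of _ 1]) (auto simp: fzero_def)
    next
      case False thus ?thesis using e by (intro exI[of _ "\<bar>x\<bar>"]) (auto simp: fzero_def)
    qed
  qed
  moreover have "\<forall>x y t. 0 \<le> t \<and> t \<le> 1 \<longrightarrow> min (fzero x) (fzero y) \<le> fzero (t * x + (1 - t) * y)"
    by (auto simp: fzero_def)
  ultimately show ?thesis unfolding fuzzy_number_def
    by (auto simp: fzero_def)
qed

lemma fsmul_fsmul: "a \<noteq> 0 \<Longrightarrow> b \<noteq> 0 \<Longrightarrow> fsmul a (fsmul b u) = fsmul (a * b) u"
  by (simp add: fsmul_def fun_eq_iff divide_divide_eq_left mult.commute)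

lemma supp_fsmul:
  assumes "c \<noteq> 0" shows "{x. 0 < fsmul c u x} = (\<lambda>x. c * x) ` {x. 0 < u x}"
proof -
  have "{x. 0 < u (x / c)} = (\<lambda>x. c * x) ` {x. 0 < u x}"
  proof safe
    fix x assume "0 < u (x / c)"
    thus "x \<in> (\<lambda>x. c * x) ` {x. 0 < u x}" using assms by (intro image_eqI[of _ _ "x / c"]) auto
  next
    fix x assume "0 < u x"
    thus "0 < u (c * x / c)" using assms by simp
  qed
  thus ?thesis using assms by (simp add: fsmul_def)
qed

lemma level_fsmul:
  assumes "c \<noteq> 0" shows "level (fsmul c u) r = (\<lambda>x. c * x) ` level u r"
proof (cases "r = 0")
  case True
  have "closure ((\<lambda>x. c * x) ` {x. 0 < u x}) = (\<lambda>x. c * x) ` closure {x. 0 < u x}"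
    using closure_scaleR[of c "{x. 0 < u x}"] by simp
  thus ?thesis using True supp_fsmul[OF assms] by (simp add: level_def)
next
  case False
  have "{x. r \<le> u (x / c)} = (\<lambda>x. c * x) ` {x. r \<le> u x}"
  proof safe
    fix x assume "r \<le> u (x / c)"
    thus "x \<in> (\<lambda>x. c * x) ` {x. r \<le> u x}" using assms by (intro image_eqI[of _ _ "x / c"]) auto
  next
    fix x assume "r \<le> u x"
    thus "r \<le> u (c * x / c)" using assms by simp
  qed
  thus ?thesis using False assms by (simp add: level_def fsmul_def)
qed

lemma fsmul_fuzzy:
  assumes "c \<noteq> 0" "fuzzy_number u" shows "fuzzy_number (fsmul c u)"
proof -
  have f: "fsmul c u = (\<lambda>x. u (x / c))" using assms by (simp add: fsmul_def)
  have r: "\<forall>x. 0 \<le> u (x / c) \<and> u (x / c) \<le> 1" using fz_range[OF assms(2)] by blast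
  obtain x0 where x0: "u x0 = 1" using fz_normal[OF assms(2)] by blast
  have n: "\<exists>x. u (x / c) = 1" using x0 assms(1) by (intro exI[of _ "c * x0"]) simp
  have cv: "\<forall>x y t. 0 \<le> t \<and> t \<le> 1 \<longrightarrow> min (u (x / c)) (u (y / c)) \<le> u ((t * x + (1 - t) * y) / c)"
  proof safe
    fix x y t :: real assume "0 \<le> t" "t \<le> 1"
    from fz_convex[OF assms(2) this, of "x / c" "y / c"]
    show "min (u (x / c)) (u (y / c)) \<le> u ((t * x + (1 - t) * y) / c)"
      by (simp add: add_divide_distrib)
  qed
  have usc: "\<forall>x. \<forall>e>0. \<exists>d>0. \<forall>y. \<bar>y - x\<bar> < d \<longrightarrow> u (y / c) < u (x / c) + e"
  proof safe
    fix x e :: real assume e: "e > 0"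
    obtain d where d: "d > 0" "\<forall>y. \<bar>y - x / c\<bar> < d \<longrightarrow> u y < u (x / c) + e"
      using assms(2) e unfolding fuzzy_number_def by blast
    show "\<exists>d>0. \<forall>y. \<bar>y - x\<bar> < d \<longrightarrow> u (y / c) < u (x / c) + e"
    proof (intro exI[of _ "d * \<bar>c\<bar>"] conjI allI impI)
      show "0 < d * \<bar>c\<bar>" using d assms(1) by simp
      fix y assume "\<bar>y - x\<bar> < d * \<bar>c\<bar>"
      hence "\<bar>y / c - x / c\<bar> < d" using assms(1)
        by (simp add: diff_divide_distrib[symmetric] abs_divide pos_divide_less_eq)
      thus "u (y / c) < u (x / c) + e" using d by blast
    qed
  qed
  have cp: "compact (closure {x. 0 < u (x / c)})"
  proof -
    have "{x. 0 < u (x / c)} = (\<lambda>x. c * x) ` {x. 0 < u x}" using supp_fsmul[OF assms(1), of u] f by simp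
    hence "closure {x. 0 < u (x / c)} = (\<lambda>x. c * x) ` closure {x. 0 < u x}"
      using closure_scaleR[of c "{x. 0 < u x}"] by simp
    moreover have "compact ((\<lambda>x. c * x) ` closure {x. 0 < u x})"
      using compact_scaling[OF fz_compact_supp[OF assms(2)], of c] by simp
    ultimately show ?thesis by simp
  qed
  show ?thesis unfolding f fuzzy_number_def using r n cv usc cp by blast
qed

lemma lo_fsmul_pos:
  assumes "c > 0" "fuzzy_number u" "r \<in> {0..1}"
  shows "lo (fsmul c u) r = c * lo u r" "up (fsmul c u) r = c * up u r"
proof -
  have L: "level (fsmul c u) r = (\<lambda>x. c * x) ` level u r" using level_fsmul assms(1) by simp
  note p = lo_props[OF assms(2,3)]
  show "lo (fsmul c u) r = c * lo u r" unfolding lo_def L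
    by (rule cInf_eq_minimum) (use p assms(1) in \<open>auto simp: lo_def\<close>)
  show "up (fsmul c u) r = c * up u r" unfolding up_def L
    by (rule cSup_eq_maximum) (use p assms(1) in \<open>auto simp: up_def\<close>)
qed

lemma lo_fsmul_neg:
  assumes "c < 0" "fuzzy_number u" "r \<in> {0..1}"
  shows "lo (fsmul c u) r = c * up u r" "up (fsmul c u) r = c * lo u r"
proof -
  have L: "level (fsmul c u) r = (\<lambda>x. c * x) ` level u r" using level_fsmul assms(1) by simp
  note p = lo_props[OF assms(2,3)]
  show "lo (fsmul c u) r = c * up u r" unfolding lo_def L
    by (rule cInf_eq_minimum) (use p assms(1) in \<open>auto simp: up_def mult_left_mono_neg\<close>)
  show "up (fsmul c u) r = c * lo u r" unfolding up_def L
    by (rule cSup_eq_maximum) (use p assms(1) in \<open>auto simp: lo_def mult_left_mono_neg\<close>)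
qed

lemma lo_fzero:
  assumes "r \<in> {0..1}" shows "lo fzero r = 0" "up fzero r = 0"
proof -
  have "level fzero r = {0}"
  proof (cases "r = 0")
    case True
    have "{x. 0 < fzero x} = {0}" by (auto simp: fzero_def)
    thus ?thesis using True by (simp add: level_def)
  next
    case False
    thus ?thesis using assms by (auto simp: level_def fzero_def)
  qed
  thus "lo fzero r = 0" "up fzero r = 0" by (simp_all add: lo_def up_def)
qed

lemma fD_fsmul:
  assumes "c > 0" "fuzzy_number u" "fuzzy_number v"
  shows "fD (fsmul c u) (fsmul c v) = c * fD u v"
proof -
  have "\<And>r. r \<in> {0..1} \<Longrightarrow> max \<bar>lo (fsmul c u) r - lo (fsmul c v) r\<bar> \<bar>up (fsmul c u) r - up (fsmul c v) r\<bar>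
      = c * max \<bar>lo u r - lo v r\<bar> \<bar>up u r - up v r\<bar>"
  proof -
    fix r :: real assume r: "r \<in> {0..1}"
    have "\<bar>c * lo u r - c * lo v r\<bar> = c * \<bar>lo u r - lo v r\<bar>" "\<bar>c * up u r - c * up v r\<bar> = c * \<bar>up u r - up v r\<bar>"
      using assms(1) by (simp_all add: right_diff_distrib[symmetric] abs_mult)
    thus "?thesis r" using lo_fsmul_pos[OF assms(1,2) r] lo_fsmul_pos[OF assms(1,3) r] assms(1)
      by (simp add: max_mult_distrib_left)
  qed
  hence "fD (fsmul c u) (fsmul c v) = (SUP r\<in>{0..1}. c * max \<bar>lo u r - lo v r\<bar> \<bar>up u r - up v r\<bar>)"
    unfolding fD_def by (intro SUP_cong) auto
  also have "\<dots> = c * fD u v" unfolding fD_def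
    by (rule sup_scale[OF assms(1) _ fD_bdd[OF assms(2,3)]]) simp
  finally show ?thesis .
qed

lemma fD_fsmul_zero:
  assumes "c > 0" "fuzzy_number u"
  shows "fD fzero (fsmul c u) = c * fD fzero u"
  using fD_fsmul[OF assms(1) fzero_fuzzy assms(2)] fsmul_fzero by simp

lemma fadd_fsmul:
  assumes "c \<noteq> 0" shows "fadd (fsmul c v) (fsmul c w) = fsmul c (fadd v w)"
proof
  fix x
  have "range (\<lambda>y. min (v (y / c)) (w ((x - y) / c))) = range (\<lambda>y. min (v y) (w (x / c - y)))"
  proof safe
    fix y show "min (v (y / c)) (w ((x - y) / c)) \<in> range (\<lambda>y. min (v y) (w (x / c - y)))"
      by (rule image_eqI[of _ _ "y / c"]) (simp_all add: diff_divide_distrib)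
  next
    fix y show "min (v y) (w (x / c - y)) \<in> range (\<lambda>y. min (v (y / c)) (w ((x - y) / c)))"
      by (rule image_eqI[of _ _ "c * y"]) (use assms in \<open>simp_all add: diff_divide_distrib\<close>)
  qed
  thus "fadd (fsmul c v) (fsmul c w) x = fsmul c (fadd v w) x"
    using assms by (simp add: fadd_def fsmul_def)
qed



lemma closure_sum_compact:
  fixes A B :: "real set"
  assumes "compact (closure A)" "compact (closure B)"
  shows "closure {a + b | a b. a \<in> A \<and> b \<in> B} = {a + b | a b. a \<in> closure A \<and> b \<in> closure B}"
proof
  have c: "compact {a + b | a b. a \<in> closure A \<and> b \<in> closure B}" by (rule compact_sums[OF assms])
  show "closure {a + b | a b. a \<in> A \<and> b \<in> B} \<subseteq> {a + b | a b. a \<in> closure A \<and> b \<in> closure B}"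
    by (rule closure_minimal) (use closure_subset compact_imp_closed[OF c] in auto)
  have "(\<lambda>(a, b). a + b) ` closure (A \<times> B) \<subseteq> closure {a + b | a b. a \<in> A \<and> b \<in> B}"
  proof (rule image_closure_subset)
    have "continuous_on UNIV (\<lambda>p::real\<times>real. fst p + snd p)" by (intro continuous_intros)
    moreover have "(\<lambda>(a, b). a + b) = (\<lambda>p::real\<times>real. fst p + snd p)" by (simp add: fun_eq_iff)
    ultimately show "continuous_on (closure (A \<times> B)) (\<lambda>(a, b). a + b)"
      using continuous_on_subset by fastforce
    show "(\<lambda>(a, b). a + b) ` (A \<times> B) \<subseteq> closure {a + b | a b. a \<in> A \<and> b \<in> B}"
      using closure_subset by fastforce
  qed simp
  thus "{a + b | a b. a \<in> closure A \<and> b \<in> closure B} \<subseteq> closure {a + b | a b. a \<in> A \<and> b \<in> B}"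
    by (auto simp: closure_Times)
qed

lemma fadd_bdd: assumes "fuzzy_number u" shows "bdd_above (range (\<lambda>y. min (u y) (v (x - y))))"
proof (rule bdd_aboveI2[of _ _ 1])
  fix y have "u y \<le> 1" using fz_range[OF assms] by blast
  thus "min (u y) (v (x - y)) \<le> 1" by linarith
qed

lemma fadd_level_pos:
  assumes u: "fuzzy_number u" and v: "fuzzy_number v" and r: "r \<in> {0<..1}"
  shows "{x. r \<le> fadd u v x} = {a + b | a b. r \<le> u a \<and> r \<le> v b}"
proof safe
  fix a b assume ab: "r \<le> u a" "r \<le> v b"
  have "min (u a) (v (a + b - a)) \<le> fadd u v (a + b)" unfolding fadd_def
    by (rule cSUP_upper[OF _ fadd_bdd[OF u]]) simp
  thus "r \<le> fadd u v (a + b)" using ab by simp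
next
  fix x assume x: "r \<le> fadd u v x"
  define K where "K s = {y. s \<le> u y} \<inter> {y. s \<le> v (x - y)}" for s
  have ne: "K s \<noteq> {}" if "s < r" for s
  proof -
    have "s < (SUP y. min (u y) (v (x - y)))" using x that by (simp add: fadd_def)
    then obtain y where "s < min (u y) (v (x - y))"
      using less_cSUP_iff[OF _ fadd_bdd[OF u]] by blast
    hence "y \<in> K s" by (simp add: K_def)
    thus ?thesis by blast
  qed
  have mono: "K t \<subseteq> K s" if "s \<le> t" for s t using that by (auto simp: K_def)
  have cl: "closed (K s)" for s
  proof -
    have "closed ((\<lambda>y. x - y) -` {z. s \<le> v z})"
      by (rule continuous_closed_vimage[OF fz_closed_ge[OF v]]) (intro continuous_intros)
    thus ?thesis unfolding K_def by (intro closed_Int fz_closed_ge[OF u]) (simp add: vimage_def)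
  qed
  have cS: "compact {y. r / 2 \<le> u y}"
  proof -
    have "r / 2 \<in> {0..1}" "r / 2 \<noteq> 0" using r by auto
    thus ?thesis using level_compact[OF u, of "r/2"] by (simp add: level_def)
  qed
  have "{y. r / 2 \<le> u y} \<inter> \<Inter>(K ` {r/2..<r}) \<noteq> {}"
  proof (rule compact_imp_fip[OF cS])
    show "\<And>T. T \<in> K ` {r/2..<r} \<Longrightarrow> closed T" using cl by auto
    fix F' assume F': "finite F'" "F' \<subseteq> K ` {r/2..<r}"
    obtain T where T: "T \<subseteq> {r/2..<r}" "finite T" "F' = K ` T"
      using finite_subset_image[OF F'(1) F'(2)] by blast
    define m where "m = Max (insert (r/2) T)"
    have sub: "insert (r/2) T \<subseteq> {r/2..<r}" using T r by auto
    have "m \<in> insert (r/2) T" unfolding m_def by (rule Max_in) (use T in auto)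
    hence m: "m \<in> {r/2..<r}" using sub by blast
    have "K m \<subseteq> {y. r / 2 \<le> u y} \<inter> \<Inter>F'"
    proof -
      have 1: "K m \<subseteq> K (r/2)" using m by (intro mono) auto
      have 2: "K (r/2) \<subseteq> {y. r / 2 \<le> u y}" unfolding K_def by blast
      have "K m \<subseteq> K t" if "t \<in> T" for t
        using that T(2) unfolding m_def by (intro mono) simp
      hence 3: "K m \<subseteq> \<Inter>F'" unfolding T(3) by blast
      show ?thesis using 1 2 3 by blast
    qed
    moreover have "K m \<noteq> {}" using m by (intro ne) simp
    ultimately show "{y. r / 2 \<le> u y} \<inter> \<Inter>F' \<noteq> {}" by blast
  qed
  then obtain y where y: "\<And>s. s \<in> {r/2..<r} \<Longrightarrow> y \<in> K s" by blast
  have "r \<le> u y \<and> r \<le> v (x - y)"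
  proof -
    have h: "r / 2 < r" using r by simp
    have "r \<le> u y" by (rule dense_le_bounded[OF h]) (use y in \<open>auto simp: K_def\<close>)
    moreover have "r \<le> v (x - y)" by (rule dense_le_bounded[OF h]) (use y in \<open>auto simp: K_def\<close>)
    ultimately show ?thesis by simp
  qed
  thus "\<exists>a b. x = a + b \<and> r \<le> u a \<and> r \<le> v b" by (intro exI[of _ y] exI[of _ "x - y"]) simp
qed

lemma fadd_supp:
  assumes u: "fuzzy_number u"
  shows "{x. 0 < fadd u v x} = {a + b | a b. a \<in> {x. 0 < u x} \<and> b \<in> {x. 0 < v x}}"
proof safe
  fix x assume "0 < fadd u v x"
  then obtain y where "0 < min (u y) (v (x - y))"
    using less_cSUP_iff[OF _ fadd_bdd[OF u]] by (auto simp: fadd_def)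
  thus "\<exists>a b. x = a + b \<and> a \<in> {x. 0 < u x} \<and> b \<in> {x. 0 < v x}"
    by (intro exI[of _ y] exI[of _ "x - y"]) simp
next
  fix a b assume ab: "0 < u a" "0 < v b"
  have "min (u a) (v (a + b - a)) \<le> fadd u v (a + b)" unfolding fadd_def
    by (rule cSUP_upper[OF _ fadd_bdd[OF u]]) simp
  thus "0 < fadd u v (a + b)" using ab by simp
qed

lemma fadd_level:
  assumes u: "fuzzy_number u" and v: "fuzzy_number v" and r: "r \<in> {0..1}"
  shows "level (fadd u v) r = {a + b | a b. a \<in> level u r \<and> b \<in> level v r}"
proof (cases "r = 0")
  case True
  show ?thesis using True fadd_supp[OF u, of v] closure_sum_compact[OF fz_compact_supp[OF u] fz_compact_supp[OF v]]
    by (simp add: level_def)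
next
  case False
  hence "r \<in> {0<..1}" using r by auto
  thus ?thesis using False fadd_level_pos[OF u v] by (simp add: level_def)
qed

lemma lo_fadd:
  assumes u: "fuzzy_number u" and v: "fuzzy_number v" and r: "r \<in> {0..1}"
  shows "lo (fadd u v) r = lo u r + lo v r" "up (fadd u v) r = up u r + up v r"
proof -
  note pu = lo_props[OF u r] and pv = lo_props[OF v r]
  show "lo (fadd u v) r = lo u r + lo v r" unfolding lo_def[of "fadd u v"] fadd_level[OF assms]
    by (rule cInf_eq_minimum) (use pu pv in \<open>auto intro: add_mono\<close>)
  show "up (fadd u v) r = up u r + up v r" unfolding up_def[of "fadd u v"] fadd_level[OF assms]
    by (rule cSup_eq_maximum) (use pu pv in \<open>auto intro: add_mono\<close>)
qed

lemma fadd_cancel: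
  assumes "fuzzy_number v" "fuzzy_number w" "fuzzy_number w'" "fadd v w = fadd v w'"
  shows "w = w'"
proof (rule fz_eq_levels[OF assms(2,3)])
  fix r :: real assume "r \<in> {0<..1}"
  hence r: "r \<in> {0..1}" by auto
  show "lo w r = lo w' r \<and> up w r = up w' r"
    using lo_fadd[OF assms(1,2) r] lo_fadd[OF assms(1,3) r] assms(4) by simp
qed

lemma hdiff_props:
  assumes "hdiff_exists u v" shows "fuzzy_number (hdiff u v)" "u = fadd v (hdiff u v)"
proof -
  have e: "\<exists>w. fuzzy_number w \<and> u = fadd v w" using assms by (simp add: hdiff_exists_def)
  have "fuzzy_number (hdiff u v) \<and> u = fadd v (hdiff u v)"
    unfolding hdiff_def by (rule someI_ex[OF e])
  thus "fuzzy_number (hdiff u v)" "u = fadd v (hdiff u v)" by simp_all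
qed

lemma hdiff_unique:
  assumes "fuzzy_number v" "fuzzy_number w" "u = fadd v w" shows "hdiff u v = w"
proof -
  have ex: "hdiff_exists u v" using assms by (auto simp: hdiff_exists_def)
  show ?thesis using fadd_cancel[OF assms(1) hdiff_props(1)[OF ex] assms(2)] hdiff_props(2)[OF ex] assms(3)
    by simp
qed

lemma hdiff_fsmul:
  assumes "c \<noteq> 0" "fuzzy_number v" "hdiff_exists u v"
  shows "hdiff_exists (fsmul c u) (fsmul c v)" "hdiff (fsmul c u) (fsmul c v) = fsmul c (hdiff u v)"
proof -
  have eq: "fsmul c u = fadd (fsmul c v) (fsmul c (hdiff u v))"
    using hdiff_props(2)[OF assms(3)] fadd_fsmul[OF assms(1), of v "hdiff u v"] by simp
  have f: "fuzzy_number (fsmul c (hdiff u v))" by (rule fsmul_fuzzy[OF assms(1) hdiff_props(1)[OF assms(3)]])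
  show "hdiff_exists (fsmul c u) (fsmul c v)" using eq f by (auto simp: hdiff_exists_def)
  show "hdiff (fsmul c u) (fsmul c v) = fsmul c (hdiff u v)"
    by (rule hdiff_unique[OF fsmul_fuzzy[OF assms(1,2)] f eq])
qed



abbreviation sc :: "real \<Rightarrow> (real \<Rightarrow> real \<Rightarrow> real) \<Rightarrow> (real \<Rightarrow> real \<Rightarrow> real)" where
  "sc c g \<equiv> (\<lambda>t. fsmul c (g t))"

lemma rquot_fuzzy: "h > 0 \<Longrightarrow> rquot_ok s g x h \<Longrightarrow> fuzzy_number (rquot s g x h)"
  by (cases s) (auto simp: rquot_ok_def rquot_def intro!: fsmul_fuzzy hdiff_props)

lemma lquot_fuzzy: "h > 0 \<Longrightarrow> lquot_ok s g x h \<Longrightarrow> fuzzy_number (lquot s g x h)"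
  by (cases s) (auto simp: lquot_ok_def lquot_def intro!: fsmul_fuzzy hdiff_props)

lemma fsmul_comm: "a \<noteq> 0 \<Longrightarrow> b \<noteq> 0 \<Longrightarrow> fsmul a (fsmul b u) = fsmul b (fsmul a u)"
  by (simp add: fsmul_fsmul mult.commute)

lemma rquot_sc:
  assumes c: "c > 0" and h: "h > 0" and f1: "fuzzy_number (g x)" and f2: "fuzzy_number (g (x + h))"
    and ok: "rquot_ok s g x h"
  shows "rquot_ok s (sc c g) x h" "rquot s (sc c g) x h = fsmul c (rquot s g x h)"
proof -
  have c0: "c \<noteq> 0" using c by simp
  have h1: "1 / h \<noteq> 0" "- 1 / h \<noteq> 0" using h by auto
  show "rquot_ok s (sc c g) x h"
    using ok hdiff_fsmul(1)[OF c0 f1] hdiff_fsmul(1)[OF c0 f2] by (cases s) (auto simp: rquot_ok_def)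
  show "rquot s (sc c g) x h = fsmul c (rquot s g x h)"
    using ok hdiff_fsmul(2)[OF c0 f1] hdiff_fsmul(2)[OF c0 f2] fsmul_comm[OF c0 h1(1)] fsmul_comm[OF c0 h1(2)]
    by (cases s) (auto simp: rquot_ok_def rquot_def)
qed

lemma lquot_sc:
  assumes c: "c > 0" and h: "h > 0" and f1: "fuzzy_number (g x)" and f2: "fuzzy_number (g (x - h))"
    and ok: "lquot_ok s g x h"
  shows "lquot_ok s (sc c g) x h" "lquot s (sc c g) x h = fsmul c (lquot s g x h)"
proof -
  have c0: "c \<noteq> 0" using c by simp
  have h1: "1 / h \<noteq> 0" "- 1 / h \<noteq> 0" using h by auto
  show "lquot_ok s (sc c g) x h"
    using ok hdiff_fsmul(1)[OF c0 f1] hdiff_fsmul(1)[OF c0 f2] by (cases s) (auto simp: lquot_ok_def)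
  show "lquot s (sc c g) x h = fsmul c (lquot s g x h)"
    using ok hdiff_fsmul(2)[OF c0 f1] hdiff_fsmul(2)[OF c0 f2] fsmul_comm[OF c0 h1(1)] fsmul_comm[OF c0 h1(2)]
    by (cases s) (auto simp: lquot_ok_def lquot_def)
qed

lemma hfc_sc:
  assumes c: "c > 0" and g: "\<And>t. t \<in> {a..b} \<Longrightarrow> fuzzy_number (g t)" and x: "x \<in> {a..b}"
    and D: "has_fderiv_case s s' a b g L x"
  shows "has_fderiv_case s s' a b (sc c g) (fsmul c L) x"
proof -
  have L: "fuzzy_number L" using D by (simp add: has_fderiv_case_def)
  obtain d where d: "d > 0" "\<And>h. 0 < h \<Longrightarrow> h < d \<Longrightarrow> (x + h \<le> b \<longrightarrow> rquot_ok s g x h) \<and> (a \<le> x - h \<longrightarrow> lquot_ok s' g x h)"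
    using D unfolding has_fderiv_case_def by blast
  have lr: "((\<lambda>h. fD (rquot s g x h) L) \<longlongrightarrow> 0) (at 0 within {h. 0 < h \<and> x + h \<le> b})"
   and ll: "((\<lambda>h. fD (lquot s' g x h) L) \<longlongrightarrow> 0) (at 0 within {h. 0 < h \<and> a \<le> x - h})"
    using D unfolding has_fderiv_case_def by blast+
  have gx: "fuzzy_number (g x)" using g x by blast
  have R: "0 < h \<Longrightarrow> h < d \<Longrightarrow> x + h \<le> b \<Longrightarrow>
      rquot_ok s (sc c g) x h \<and> rquot s (sc c g) x h = fsmul c (rquot s g x h) \<and> rquot_ok s g x h" for h
  proof -
    assume h: "0 < h" "h < d" "x + h \<le> b"
    have ok: "rquot_ok s g x h" using d(2)[OF h(1,2)] h(3) by blast
    have "fuzzy_number (g (x + h))" using g x h by auto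
    thus ?thesis using rquot_sc[OF c h(1) gx _ ok] ok by blast
  qed
  have Lf: "0 < h \<Longrightarrow> h < d \<Longrightarrow> a \<le> x - h \<Longrightarrow>
      lquot_ok s' (sc c g) x h \<and> lquot s' (sc c g) x h = fsmul c (lquot s' g x h) \<and> lquot_ok s' g x h" for h
  proof -
    assume h: "0 < h" "h < d" "a \<le> x - h"
    have ok: "lquot_ok s' g x h" using d(2)[OF h(1,2)] h(3) by blast
    have "fuzzy_number (g (x - h))" using g x h by auto
    thus ?thesis using lquot_sc[OF c h(1) gx _ ok] ok by blast
  qed
  have 1: "\<exists>d>0. \<forall>h. 0 < h \<and> h < d \<longrightarrow>
        (x + h \<le> b \<longrightarrow> rquot_ok s (sc c g) x h) \<and> (a \<le> x - h \<longrightarrow> lquot_ok s' (sc c g) x h)"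
    using R Lf d(1) by blast
  have 2: "((\<lambda>h. fD (rquot s (sc c g) x h) (fsmul c L)) \<longlongrightarrow> 0) (at 0 within {h. 0 < h \<and> x + h \<le> b})"
  proof (rule Lim_transform_eventually[OF tendsto_mult_right_zero[OF lr, of c]])
    show "\<forall>\<^sub>F h in at 0 within {h. 0 < h \<and> x + h \<le> b}. c * fD (rquot s g x h) L = fD (rquot s (sc c g) x h) (fsmul c L)"
      unfolding eventually_at
    proof (intro exI[of _ d] conjI ballI impI)
      fix h assume h: "h \<in> {h. 0 < h \<and> x + h \<le> b}" "h \<noteq> 0 \<and> dist h 0 < d"
      hence hh: "0 < h" "h < d" "x + h \<le> b" by (auto simp: dist_real_def)
      from R[OF hh] show "c * fD (rquot s g x h) L = fD (rquot s (sc c g) x h) (fsmul c L)"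
        using fD_fsmul[OF c rquot_fuzzy[OF hh(1)] L] by simp
    qed (rule d(1))
  qed
  have 3: "((\<lambda>h. fD (lquot s' (sc c g) x h) (fsmul c L)) \<longlongrightarrow> 0) (at 0 within {h. 0 < h \<and> a \<le> x - h})"
  proof (rule Lim_transform_eventually[OF tendsto_mult_right_zero[OF ll, of c]])
    show "\<forall>\<^sub>F h in at 0 within {h. 0 < h \<and> a \<le> x - h}. c * fD (lquot s' g x h) L = fD (lquot s' (sc c g) x h) (fsmul c L)"
      unfolding eventually_at
    proof (intro exI[of _ d] conjI ballI impI)
      fix h assume h: "h \<in> {h. 0 < h \<and> a \<le> x - h}" "h \<noteq> 0 \<and> dist h 0 < d"
      hence hh: "0 < h" "h < d" "a \<le> x - h" by (auto simp: dist_real_def)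
      from Lf[OF hh] show "c * fD (lquot s' g x h) L = fD (lquot s' (sc c g) x h) (fsmul c L)"
        using fD_fsmul[OF c lquot_fuzzy[OF hh(1)] L] by simp
    qed (rule d(1))
  qed
  show ?thesis unfolding has_fderiv_case_def
    using fsmul_fuzzy[OF _ L, of c] c 1 2 3 by simp
qed

lemma has_fderiv_sc:
  assumes c: "c > 0" and g: "\<And>t. t \<in> {a..b} \<Longrightarrow> fuzzy_number (g t)" and x: "x \<in> {a..b}"
    and D: "has_fderiv hk a b g L x"
  shows "has_fderiv hk a b (sc c g) (fsmul c L) x"
proof -
  have H: "has_fderiv_case s s' a b (sc c g) (fsmul c L) x" if "has_fderiv_case s s' a b g L x" for s s'
    by (rule hfc_sc[OF c _ x that]) (rule g)
  show ?thesis
  proof (cases hk)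
    case True thus ?thesis using D H by (simp add: has_fderiv_def)
  next
    case False thus ?thesis using D H by (auto simp: has_fderiv_def)
  qed
qed

section \<open>Uniqueness\<close>

lemma crisp_lemma:
  assumes u: "fuzzy_number u" and v: "fuzzy_number v" and w: "fuzzy_number w" and w': "fuzzy_number w'"
    and e1: "u = fadd v w" and e2: "v = fadd u w'" and h: "h > 0"
  shows "fD (fsmul (1 / h) w) (fsmul (- 1 / h) w') = 0"
proof (rule antisym)
  have h1: "1 / h > 0" "- 1 / h < 0" using h by auto
  show "fD (fsmul (1 / h) w) (fsmul (- 1 / h) w') \<le> 0"
  proof (rule fD_le)
    fix r :: real assume r: "r \<in> {0..1}"
    have a: "lo u r = lo v r + lo w r" "up u r = up v r + up w r"
      using lo_fadd[OF v w r] e1 by simp_all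
    have b: "lo v r = lo u r + lo w' r" "up v r = up u r + up w' r"
      using lo_fadd[OF u w' r] e2 by simp_all
    have c: "lo w r \<le> up w r" "lo w' r \<le> up w' r" using lo_bounds(3)[OF w r] lo_bounds(3)[OF w' r] by auto
    have d: "lo w r = up w r" "up w' r = - up w r" "lo w' r = - lo w r" using a b c by linarith+
    have "lo (fsmul (1 / h) w) r = lo (fsmul (- 1 / h) w') r"
      using lo_fsmul_pos(1)[OF h1(1) w r] lo_fsmul_neg(1)[OF h1(2) w' r] d by simp
    moreover have "up (fsmul (1 / h) w) r = up (fsmul (- 1 / h) w') r"
      using lo_fsmul_pos(2)[OF h1(1) w r] lo_fsmul_neg(2)[OF h1(2) w' r] d by simp
    ultimately show "max \<bar>lo (fsmul (1 / h) w) r - lo (fsmul (- 1 / h) w') r\<bar>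
        \<bar>up (fsmul (1 / h) w) r - up (fsmul (- 1 / h) w') r\<bar> \<le> 0" by simp
  qed
  show "0 \<le> fD (fsmul (1 / h) w) (fsmul (- 1 / h) w')"
    by (rule fD_nonneg) (use fsmul_fuzzy w w' h in auto)
qed

lemma rquot_same:
  assumes g1: "fuzzy_number (g x)" and g2: "fuzzy_number (g (x + h))" and h: "h > 0"
    and o1: "rquot_ok s1 g x h" and o2: "rquot_ok s2 g x h"
  shows "fD (rquot s1 g x h) (rquot s2 g x h) = 0"
proof (cases "s1 = s2")
  case True thus ?thesis by (simp add: fD_self)
next
  case False
  have "hdiff_exists (g (x + h)) (g x)" "hdiff_exists (g x) (g (x + h))"
    using o1 o2 False by (cases s1; cases s2; simp add: rquot_ok_def)+
  note H = this[THEN hdiff_props(1)] this[THEN hdiff_props(2)]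
  have C: "fD (rquot True g x h) (rquot False g x h) = 0"
    unfolding rquot_def using crisp_lemma[OF g2 g1 H(1) H(2) H(3) H(4) h] by simp
  show ?thesis using False C fD_sym by (cases s1; cases s2) auto
qed

lemma lquot_same:
  assumes g1: "fuzzy_number (g x)" and g2: "fuzzy_number (g (x - h))" and h: "h > 0"
    and o1: "lquot_ok s1 g x h" and o2: "lquot_ok s2 g x h"
  shows "fD (lquot s1 g x h) (lquot s2 g x h) = 0"
proof (cases "s1 = s2")
  case True thus ?thesis by (simp add: fD_self)
next
  case False
  have "hdiff_exists (g x) (g (x - h))" "hdiff_exists (g (x - h)) (g x)"
    using o1 o2 False by (cases s1; cases s2; simp add: lquot_ok_def)+
  note H = this[THEN hdiff_props(1)] this[THEN hdiff_props(2)]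
  have C: "fD (lquot True g x h) (lquot False g x h) = 0"
    unfolding lquot_def using crisp_lemma[OF g1 g2 H(1) H(2) H(3) H(4) h] by simp
  show ?thesis using False C fD_sym by (cases s1; cases s2) auto
qed

lemma limit_unique_abs:
  assumes F: "F \<noteq> bot" and L: "fuzzy_number L" and L': "fuzzy_number L'"
    and ev: "eventually (\<lambda>h. fuzzy_number (q1 h) \<and> fuzzy_number (q2 h) \<and> fD (q1 h) (q2 h) = 0) F"
    and t1: "((\<lambda>h. fD (q1 h) L) \<longlongrightarrow> 0) F" and t2: "((\<lambda>h. fD (q2 h) L') \<longlongrightarrow> 0) F"
  shows "L = L'"
proof (rule fD_zero_eq[OF L L'])
  have t: "((\<lambda>h. fD (q1 h) L + fD (q2 h) L') \<longlongrightarrow> 0 + 0) F" by (intro tendsto_add t1 t2)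
  have "eventually (\<lambda>h. fD L L' \<le> fD (q1 h) L + fD (q2 h) L') F"
    using ev
  proof eventually_elim
    case (elim h)
    hence f: "fuzzy_number (q1 h)" "fuzzy_number (q2 h)" and z: "fD (q1 h) (q2 h) = 0" by auto
    have "fD L L' \<le> fD L (q1 h) + fD (q1 h) L'" by (rule fD_tri[OF L f(1) L'])
    moreover have "fD (q1 h) L' \<le> fD (q1 h) (q2 h) + fD (q2 h) L'" by (rule fD_tri[OF f(1) f(2) L'])
    ultimately show ?case using z fD_sym[of L "q1 h"] by linarith
  qed
  from tendsto_le[OF _ t tendsto_const this] F show "fD L L' \<le> 0" by simp
qed

lemma not_bot_right:
  assumes "x < b" shows "at 0 within {h::real. 0 < h \<and> x + h \<le> b} \<noteq> bot"
proof -
  have "(0::real) islimpt {h. 0 < h \<and> x + h \<le> b}"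
    unfolding islimpt_approachable
  proof (intro allI impI)
    fix e :: real assume e: "e > 0"
    show "\<exists>x'\<in>{h. 0 < h \<and> x + h \<le> b}. x' \<noteq> 0 \<and> dist x' 0 < e"
      using e assms by (intro bexI[of _ "min (e/2) (b - x)"]) (auto simp: dist_real_def)
  qed
  thus ?thesis using trivial_limit_within by blast
qed

lemma not_bot_left:
  assumes "a < x" shows "at 0 within {h::real. 0 < h \<and> a \<le> x - h} \<noteq> bot"
proof -
  have "(0::real) islimpt {h. 0 < h \<and> a \<le> x - h}"
    unfolding islimpt_approachable
  proof (intro allI impI)
    fix e :: real assume e: "e > 0"
    show "\<exists>x'\<in>{h. 0 < h \<and> a \<le> x - h}. x' \<noteq> 0 \<and> dist x' 0 < e"
      using e assms by (intro bexI[of _ "min (e/2) (x - a)"]) (auto simp: dist_real_def)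
  qed
  thus ?thesis using trivial_limit_within by blast
qed

lemma hfc_unique:
  assumes ab: "a < b" and g: "\<And>t. t \<in> {a..b} \<Longrightarrow> fuzzy_number (g t)" and x: "x \<in> {a..b}"
    and D1: "has_fderiv_case s1 s1' a b g L x" and D2: "has_fderiv_case s2 s2' a b g L' x"
  shows "L = L'"
proof -
  have L: "fuzzy_number L" "fuzzy_number L'" using D1 D2 by (simp_all add: has_fderiv_case_def)
  obtain d1 where d1: "d1 > 0" "\<And>h. 0 < h \<Longrightarrow> h < d1 \<Longrightarrow> (x + h \<le> b \<longrightarrow> rquot_ok s1 g x h) \<and> (a \<le> x - h \<longrightarrow> lquot_ok s1' g x h)"
    using D1 unfolding has_fderiv_case_def by blast
  obtain d2 where d2: "d2 > 0" "\<And>h. 0 < h \<Longrightarrow> h < d2 \<Longrightarrow> (x + h \<le> b \<longrightarrow> rquot_ok s2 g x h) \<and> (a \<le> x - h \<longrightarrow> lquot_ok s2' g x h)"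
    using D2 unfolding has_fderiv_case_def by blast
  have gx: "fuzzy_number (g x)" using g x by blast
  show ?thesis
  proof (cases "x < b")
    case True
    let ?F = "at 0 within {h::real. 0 < h \<and> x + h \<le> b}"
    have ev: "eventually (\<lambda>h. fuzzy_number (rquot s1 g x h) \<and> fuzzy_number (rquot s2 g x h) \<and>
        fD (rquot s1 g x h) (rquot s2 g x h) = 0) ?F"
      unfolding eventually_at
    proof (rule exI[of _ "min d1 d2"], rule conjI[OF _ ballI[OF impI]])
      fix h assume h: "h \<in> {h. 0 < h \<and> x + h \<le> b}" "h \<noteq> 0 \<and> dist h 0 < min d1 d2"
      hence hh: "0 < h" "h < d1" "h < d2" "x + h \<le> b" by (auto simp: dist_real_def)
      have o: "rquot_ok s1 g x h" "rquot_ok s2 g x h" using d1(2)[OF hh(1,2)] d2(2)[OF hh(1,3)] hh(4) by auto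
      have "fuzzy_number (g (x + h))" using g x hh by auto
      thus "fuzzy_number (rquot s1 g x h) \<and> fuzzy_number (rquot s2 g x h) \<and> fD (rquot s1 g x h) (rquot s2 g x h) = 0"
        using rquot_same[OF gx _ hh(1) o] rquot_fuzzy[OF hh(1) o(1)] rquot_fuzzy[OF hh(1) o(2)] by blast
    qed (use d1 d2 in simp)
    show ?thesis
      by (rule limit_unique_abs[OF not_bot_right[OF True] L ev])
         (use D1 D2 in \<open>simp_all add: has_fderiv_case_def\<close>)
  next
    case False
    hence xa: "a < x" using x ab by auto
    let ?F = "at 0 within {h::real. 0 < h \<and> a \<le> x - h}"
    have ev: "eventually (\<lambda>h. fuzzy_number (lquot s1' g x h) \<and> fuzzy_number (lquot s2' g x h) \<and>
        fD (lquot s1' g x h) (lquot s2' g x h) = 0) ?F"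
      unfolding eventually_at
    proof (rule exI[of _ "min d1 d2"], rule conjI[OF _ ballI[OF impI]])
      fix h assume h: "h \<in> {h. 0 < h \<and> a \<le> x - h}" "h \<noteq> 0 \<and> dist h 0 < min d1 d2"
      hence hh: "0 < h" "h < d1" "h < d2" "a \<le> x - h" by (auto simp: dist_real_def)
      have o: "lquot_ok s1' g x h" "lquot_ok s2' g x h" using d1(2)[OF hh(1,2)] d2(2)[OF hh(1,3)] hh(4) by auto
      have "fuzzy_number (g (x - h))" using g x hh by auto
      thus "fuzzy_number (lquot s1' g x h) \<and> fuzzy_number (lquot s2' g x h) \<and> fD (lquot s1' g x h) (lquot s2' g x h) = 0"
        using lquot_same[OF gx _ hh(1) o] lquot_fuzzy[OF hh(1) o(1)] lquot_fuzzy[OF hh(1) o(2)] by blast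
    qed (use d1 d2 in simp)
    show ?thesis
      by (rule limit_unique_abs[OF not_bot_left[OF xa] L ev])
         (use D1 D2 in \<open>simp_all add: has_fderiv_case_def\<close>)
  qed
qed

lemma has_fderiv_unique:
  assumes ab: "a < b" and g: "\<And>t. t \<in> {a..b} \<Longrightarrow> fuzzy_number (g t)" and x: "x \<in> {a..b}"
    and D1: "has_fderiv hk a b g L x" and D2: "has_fderiv hk a b g L' x"
  shows "L = L'"
  using D1 D2 hfc_unique[OF ab g x] unfolding has_fderiv_def by (cases hk) auto

lemma has_fderiv_fuzzy: "has_fderiv hk a b g L x \<Longrightarrow> fuzzy_number L"
  unfolding has_fderiv_def has_fderiv_case_def by (cases hk) auto



lemma quot_bound1:
  assumes u: "fuzzy_number u" and v: "fuzzy_number v" and w: "fuzzy_number w" and h: "h > 0"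
    and e: "u = fadd v w"
  shows "fD u v \<le> h * fD (fsmul (1 / h) w) fzero"
proof (rule fD_le)
  fix r :: real assume r: "r \<in> {0..1}"
  let ?q = "fsmul (1 / h) w"
  have q: "fuzzy_number ?q" using fsmul_fuzzy[OF _ w] h by simp
  have b: "\<bar>lo ?q r\<bar> \<le> fD ?q fzero" "\<bar>up ?q r\<bar> \<le> fD ?q fzero"
    using fD_ge[OF q fzero_fuzzy r] lo_fzero[OF r] by simp_all
  have "lo ?q r = lo w r / h" "up ?q r = up w r / h" using lo_fsmul_pos[OF _ w r, of "1/h"] h by simp_all
  hence "lo w r = h * lo ?q r" "up w r = h * up ?q r" using h by simp_all
  moreover have "lo u r = lo v r + lo w r" "up u r = up v r + up w r" using lo_fadd[OF v w r] e by simp_all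
  ultimately have "\<bar>lo u r - lo v r\<bar> = h * \<bar>lo ?q r\<bar>" "\<bar>up u r - up v r\<bar> = h * \<bar>up ?q r\<bar>"
    using h by (simp_all add: abs_mult)
  moreover have "h * \<bar>lo ?q r\<bar> \<le> h * fD ?q fzero" "h * \<bar>up ?q r\<bar> \<le> h * fD ?q fzero"
    using b h by (simp_all add: mult_left_mono)
  ultimately show "max \<bar>lo u r - lo v r\<bar> \<bar>up u r - up v r\<bar> \<le> h * fD ?q fzero" by simp
qed

lemma quot_bound2:
  assumes u: "fuzzy_number u" and v: "fuzzy_number v" and w: "fuzzy_number w" and h: "h > 0"
    and e: "v = fadd u w"
  shows "fD u v \<le> h * fD (fsmul (- 1 / h) w) fzero"
proof (rule fD_le)
  fix r :: real assume r: "r \<in> {0..1}"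
  let ?q = "fsmul (- 1 / h) w"
  have q: "fuzzy_number ?q" using fsmul_fuzzy[OF _ w] h by simp
  have b: "\<bar>lo ?q r\<bar> \<le> fD ?q fzero" "\<bar>up ?q r\<bar> \<le> fD ?q fzero"
    using fD_ge[OF q fzero_fuzzy r] lo_fzero[OF r] by simp_all
  have "lo ?q r = - up w r / h" "up ?q r = - lo w r / h" using lo_fsmul_neg[OF _ w r, of "-1/h"] h by simp_all
  hence "up w r = - h * lo ?q r" "lo w r = - h * up ?q r" using h by simp_all
  moreover have "lo v r = lo u r + lo w r" "up v r = up u r + up w r" using lo_fadd[OF u w r] e by simp_all
  ultimately have "\<bar>lo u r - lo v r\<bar> = h * \<bar>up ?q r\<bar>" "\<bar>up u r - up v r\<bar> = h * \<bar>lo ?q r\<bar>"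
    using h by (simp_all add: abs_mult)
  moreover have "h * \<bar>lo ?q r\<bar> \<le> h * fD ?q fzero" "h * \<bar>up ?q r\<bar> \<le> h * fD ?q fzero"
    using b h by (simp_all add: mult_left_mono)
  ultimately show "max \<bar>lo u r - lo v r\<bar> \<bar>up u r - up v r\<bar> \<le> h * fD ?q fzero" by simp
qed

lemma rquot_bound:
  assumes g1: "fuzzy_number (g x)" and g2: "fuzzy_number (g (x + h))" and h: "h > 0" and ok: "rquot_ok s g x h"
  shows "fD (g (x + h)) (g x) \<le> h * fD (rquot s g x h) fzero"
proof (cases s)
  case True
  hence ex: "hdiff_exists (g (x + h)) (g x)" using ok by (simp add: rquot_ok_def)
  show ?thesis using quot_bound1[OF g2 g1 hdiff_props(1)[OF ex] h hdiff_props(2)[OF ex]] True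
    by (simp add: rquot_def)
next
  case False
  hence ex: "hdiff_exists (g x) (g (x + h))" using ok by (simp add: rquot_ok_def)
  show ?thesis using quot_bound2[OF g2 g1 hdiff_props(1)[OF ex] h hdiff_props(2)[OF ex]] False
    by (simp add: rquot_def)
qed

lemma lquot_bound:
  assumes g1: "fuzzy_number (g x)" and g2: "fuzzy_number (g (x - h))" and h: "h > 0" and ok: "lquot_ok s g x h"
  shows "fD (g x) (g (x - h)) \<le> h * fD (lquot s g x h) fzero"
proof (cases s)
  case True
  hence ex: "hdiff_exists (g x) (g (x - h))" using ok by (simp add: lquot_ok_def)
  show ?thesis using quot_bound1[OF g1 g2 hdiff_props(1)[OF ex] h hdiff_props(2)[OF ex]] True
    by (simp add: lquot_def)
next
  case False
  hence ex: "hdiff_exists (g (x - h)) (g x)" using ok by (simp add: lquot_ok_def)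
  show ?thesis using quot_bound2[OF g1 g2 hdiff_props(1)[OF ex] h hdiff_props(2)[OF ex]] False
    by (simp add: lquot_def)
qed

lemma ev_small:
  fixes q :: "real \<Rightarrow> real \<Rightarrow> real" and S :: "real set"
  assumes "((\<lambda>h. fD (q h) L) \<longlongrightarrow> 0) (at 0 within S)"
  shows "\<exists>d>0. \<forall>h\<in>S. h \<noteq> 0 \<and> \<bar>h\<bar> < d \<longrightarrow> fD (q h) L < 1"
proof -
  have "eventually (\<lambda>h. fD (q h) L < 1) (at 0 within S)"
    by (rule order_tendstoD(2)[OF assms]) simp
  hence "\<exists>d>0. \<forall>x\<in>S. x \<noteq> 0 \<and> dist x 0 < d \<longrightarrow> fD (q x) L < 1" by (simp add: eventually_at)
  thus ?thesis by (simp add: dist_real_def)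
qed

definition fcontP :: "real \<Rightarrow> real \<Rightarrow> (real \<Rightarrow> real \<Rightarrow> real) \<Rightarrow> bool" where
  "fcontP a b G \<longleftrightarrow> (\<forall>x\<in>{a..b}. \<forall>e>0. \<exists>d>0. \<forall>y\<in>{a..b}. \<bar>y - x\<bar> < d \<longrightarrow> fD (G y) (G x) < e)"

lemma fcont_space_iff: "f \<in> fcont_space a b \<longleftrightarrow>
   (\<forall>x\<in>{a..b}. fuzzy_number (f x)) \<and> (\<forall>x. x \<notin> {a..b} \<longrightarrow> f x = fzero) \<and> fcontP a b f"
  unfolding fcont_space_def fcontP_def by blast

lemma hfc_cont:
  assumes g: "\<And>t. t \<in> {a..b} \<Longrightarrow> fuzzy_number (g t)" and x: "x \<in> {a..b}"
    and D: "has_fderiv_case s s' a b g L x" and e: "e > 0"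
  shows "\<exists>d>0. \<forall>y\<in>{a..b}. \<bar>y - x\<bar> < d \<longrightarrow> fD (g y) (g x) < e"
proof -
  have L: "fuzzy_number L" using D by (simp add: has_fderiv_case_def)
  obtain d0 where d0: "d0 > 0" "\<And>h. 0 < h \<Longrightarrow> h < d0 \<Longrightarrow> (x + h \<le> b \<longrightarrow> rquot_ok s g x h) \<and> (a \<le> x - h \<longrightarrow> lquot_ok s' g x h)"
    using D unfolding has_fderiv_case_def by blast
  obtain d1 where d1: "d1 > 0" "\<forall>h\<in>{h. 0 < h \<and> x + h \<le> b}. h \<noteq> 0 \<and> \<bar>h\<bar> < d1 \<longrightarrow> fD (rquot s g x h) L < 1"
    using ev_small[of "\<lambda>h. rquot s g x h"] D unfolding has_fderiv_case_def by blast
  obtain d2 where d2: "d2 > 0" "\<forall>h\<in>{h. 0 < h \<and> a \<le> x - h}. h \<noteq> 0 \<and> \<bar>h\<bar> < d2 \<longrightarrow> fD (lquot s' g x h) L < 1"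
    using ev_small[of "\<lambda>h. lquot s' g x h"] D unfolding has_fderiv_case_def by blast
  define K where "K = 1 + fD L fzero"
  have K: "K \<ge> 1" using fD_nonneg[OF L fzero_fuzzy] by (simp add: K_def)
  define d where "d = min (min d0 d1) (min d2 (e / K))"
  have dpos: "d > 0" using d0 d1 d2 e K by (simp add: d_def)
  have gx: "fuzzy_number (g x)" using g x by blast
  have main: "fD (g y) (g x) < e" if y: "y \<in> {a..b}" "\<bar>y - x\<bar> < d" for y
  proof -
    have gy: "fuzzy_number (g y)" using g y by blast
    consider "y = x" | "x < y" | "y < x" by linarith
    thus ?thesis
    proof cases
      case 1 thus ?thesis using e by (simp add: fD_self)
    next
      case 2
      define h where "h = y - x"
      have h: "0 < h" "h < d0" "h < d1" "x + h \<le> b" "h < e / K" using 2 y unfolding h_def d_def by auto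
      have yx: "y = x + h" by (simp add: h_def)
      have ok: "rquot_ok s g x h" using d0(2)[OF h(1,2)] h(4) by blast
      have q: "fuzzy_number (rquot s g x h)" by (rule rquot_fuzzy[OF h(1) ok])
      have lt: "fD (rquot s g x h) L < 1" using d1(2) h by auto
      have "fD (rquot s g x h) fzero \<le> fD (rquot s g x h) L + fD L fzero" by (rule fD_tri[OF q L fzero_fuzzy])
      hence qK: "fD (rquot s g x h) fzero \<le> K" using lt by (simp add: K_def)
      have "fD (g y) (g x) \<le> h * fD (rquot s g x h) fzero" using rquot_bound[OF gx _ h(1) ok] gy yx by simp
      also have "\<dots> \<le> h * K" using qK h(1) by (simp add: mult_left_mono)
      also have "\<dots> < e" using h(5) K by (simp add: pos_less_divide_eq)
      finally show ?thesis .
    next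
      case 3
      define h where "h = x - y"
      have h: "0 < h" "h < d0" "h < d2" "a \<le> x - h" "h < e / K" using 3 y unfolding h_def d_def by auto
      have yx: "y = x - h" by (simp add: h_def)
      have ok: "lquot_ok s' g x h" using d0(2)[OF h(1,2)] h(4) by blast
      have q: "fuzzy_number (lquot s' g x h)" by (rule lquot_fuzzy[OF h(1) ok])
      have lt: "fD (lquot s' g x h) L < 1" using d2(2) h by auto
      have "fD (lquot s' g x h) fzero \<le> fD (lquot s' g x h) L + fD L fzero" by (rule fD_tri[OF q L fzero_fuzzy])
      hence qK: "fD (lquot s' g x h) fzero \<le> K" using lt by (simp add: K_def)
      have "fD (g y) (g x) = fD (g x) (g y)" by (rule fD_sym)
      also have "\<dots> \<le> h * fD (lquot s' g x h) fzero" using lquot_bound[OF gx _ h(1) ok] gy yx by simp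
      also have "\<dots> \<le> h * K" using qK h(1) by (simp add: mult_left_mono)
      also have "\<dots> < e" using h(5) K by (simp add: pos_less_divide_eq)
      finally show ?thesis .
    qed
  qed
  show ?thesis using dpos main by blast
qed

lemma deriv_fcontP:
  assumes g: "\<And>t. t \<in> {a..b} \<Longrightarrow> fuzzy_number (g t)"
    and D: "\<And>x. x \<in> {a..b} \<Longrightarrow> \<exists>L. has_fderiv hk a b g L x"
  shows "fcontP a b g"
  unfolding fcontP_def
proof (intro ballI allI impI)
  fix x e :: real assume x: "x \<in> {a..b}" and e: "e > 0"
  obtain L where "has_fderiv hk a b g L x" using D[OF x] by blast
  then obtain s s' where "has_fderiv_case s s' a b g L x" unfolding has_fderiv_def by (cases hk) auto
  from hfc_cont[OF g x this e] show "\<exists>d>0. \<forall>y\<in>{a..b}. \<bar>y - x\<bar> < d \<longrightarrow> fD (g y) (g x) < e" .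
qed

lemma fcontP_bdd:
  assumes g: "\<And>t. t \<in> {a..b} \<Longrightarrow> fuzzy_number (G t)" and C: "fcontP a b G"
  shows "bdd_above ((\<lambda>t. fD fzero (G t)) ` {a..b})"
proof -
  have "continuous_on {a..b} (\<lambda>t. fD fzero (G t))"
    unfolding continuous_on_iff
  proof (intro ballI allI impI)
    fix x e :: real assume x: "x \<in> {a..b}" and e: "e > 0"
    obtain d where d: "d > 0" "\<forall>y\<in>{a..b}. \<bar>y - x\<bar> < d \<longrightarrow> fD (G y) (G x) < e"
      using C x e unfolding fcontP_def by blast
    show "\<exists>d>0. \<forall>y\<in>{a..b}. dist y x < d \<longrightarrow> dist (fD fzero (G y)) (fD fzero (G x)) < e"
    proof (intro exI[of _ d] conjI ballI impI)
      fix y assume y: "y \<in> {a..b}" "dist y x < d"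
      have gx: "fuzzy_number (G x)" "fuzzy_number (G y)" using g x y by auto
      have 1: "fD fzero (G y) \<le> fD fzero (G x) + fD (G x) (G y)" by (rule fD_tri[OF fzero_fuzzy gx(1,2)])
      have 2: "fD fzero (G x) \<le> fD fzero (G y) + fD (G y) (G x)" by (rule fD_tri[OF fzero_fuzzy gx(2,1)])
      have 3: "fD (G y) (G x) < e" using d y by (auto simp: dist_real_def)
      show "dist (fD fzero (G y)) (fD fzero (G x)) < e"
        using 1 2 3 fD_sym[of "G x" "G y"] by (simp add: dist_real_def abs_less_iff)
    qed (rule d(1))
  qed
  hence "compact ((\<lambda>t. fD fzero (G t)) ` {a..b})" by (rule compact_continuous_image[OF _ compact_Icc])
  thus ?thesis by (intro bounded_imp_bdd_above compact_imp_bounded)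
qed

lemma fderivs_Suc: "fderivs hk a b (Suc i) f = fderiv_fun hk a b (fderivs hk a b i f)"
  by (simp add: fderivs_def)

lemma fderivs_0: "fderivs hk a b 0 f = f"
  by (simp add: fderivs_def)

lemma fderiv_fun_props:
  assumes ab: "a < b" and g: "\<And>t. t \<in> {a..b} \<Longrightarrow> fuzzy_number (G t)"
    and D: "\<And>x. x \<in> {a..b} \<Longrightarrow> \<exists>L. has_fderiv hk a b G L x" and t: "t \<in> {a..b}"
  shows "has_fderiv hk a b G (fderiv_fun hk a b G t) t" "fuzzy_number (fderiv_fun hk a b G t)"
proof -
  have "has_fderiv hk a b G (SOME L. has_fderiv hk a b G L t) t" using D[OF t] by (rule someI_ex)
  thus 1: "has_fderiv hk a b G (fderiv_fun hk a b G t) t" using t by (simp add: fderiv_fun_def)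
  show "fuzzy_number (fderiv_fun hk a b G t)" by (rule has_fderiv_fuzzy[OF 1])
qed

lemma fderiv_fun_sc:
  assumes ab: "a < b" and c: "c > 0" and g: "\<And>t. t \<in> {a..b} \<Longrightarrow> fuzzy_number (G t)"
    and D: "\<And>x. x \<in> {a..b} \<Longrightarrow> \<exists>L. has_fderiv hk a b G L x"
  shows "fderiv_fun hk a b (sc c G) = sc c (fderiv_fun hk a b G)"
proof
  fix t
  show "fderiv_fun hk a b (sc c G) t = fsmul c (fderiv_fun hk a b G t)"
  proof (cases "t \<in> {a..b}")
    case False thus ?thesis by (auto simp: fderiv_fun_def fsmul_fzero)
  next
    case True
    have g': "\<And>t. t \<in> {a..b} \<Longrightarrow> fuzzy_number (sc c G t)" using g c fsmul_fuzzy by simp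
    have H: "has_fderiv hk a b (sc c G) (fsmul c (fderiv_fun hk a b G t)) t"
      by (rule has_fderiv_sc[OF c _ True fderiv_fun_props(1)[OF ab _ D True]]) (use g in auto)
    have "(SOME L. has_fderiv hk a b (sc c G) L t) = fsmul c (fderiv_fun hk a b G t)"
    proof (rule some_equality)
      show "has_fderiv hk a b (sc c G) (fsmul c (fderiv_fun hk a b G t)) t" by (rule H)
      fix L assume "has_fderiv hk a b (sc c G) L t"
      note HL = this
      show "L = fsmul c (fderiv_fun hk a b G t)"
      proof (rule has_fderiv_unique[where g="sc c G" and L=L and L'="fsmul c (fderiv_fun hk a b G t)" and hk=hk and a=a and b=b and x=t])
        show "a < b" by (rule ab)
        show "\<And>t. t \<in> {a..b} \<Longrightarrow> fuzzy_number (sc c G t)" by (rule g')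
        show "t \<in> {a..b}" using \<open>t \<in> {a..b}\<close> .
        show "has_fderiv hk a b (sc c G) L t" by (rule HL)
        show "has_fderiv hk a b (sc c G) (fsmul c (fderiv_fun hk a b G t)) t" by (rule H)
      qed
    qed
    thus ?thesis using True by (simp add: fderiv_fun_def)
  qed
qed


lemma fCp_fuzzy:
  assumes f: "f \<in> fCp_space p hk a b" and ab: "a < b"
  shows "i \<le> p \<Longrightarrow> \<forall>t\<in>{a..b}. fuzzy_number (fderivs hk a b i f t)"
proof (induction i)
  case 0 thus ?case using f by (simp add: fCp_space_def fcont_space_def fderivs_0)
next
  case (Suc i)
  hence IH: "\<forall>t\<in>{a..b}. fuzzy_number (fderivs hk a b i f t)" and ip: "i < p" by auto
  have D: "\<And>x. x \<in> {a..b} \<Longrightarrow> \<exists>L. has_fderiv hk a b (fderivs hk a b i f) L x"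
    using f ip by (simp add: fCp_space_def)
  show ?case using fderiv_fun_props(2)[OF ab _ D] IH by (simp add: fderivs_Suc)
qed

lemma fCp_cont:
  assumes f: "f \<in> fCp_space p hk a b" and ab: "a < b" and i: "i \<le> p"
  shows "fcontP a b (fderivs hk a b i f)"
proof (cases "i = p")
  case True thus ?thesis using f by (simp add: fCp_space_def fcont_space_iff)
next
  case False
  hence ip: "i < p" using i by simp
  have D: "\<And>x. x \<in> {a..b} \<Longrightarrow> \<exists>L. has_fderiv hk a b (fderivs hk a b i f) L x"
    using f ip by (simp add: fCp_space_def)
  show ?thesis by (rule deriv_fcontP[OF _ D]) (use fCp_fuzzy[OF f ab i] in auto)
qed

lemma fderivs_sc:
  assumes f: "f \<in> fCp_space p hk a b" and ab: "a < b" and c: "c > 0"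
  shows "i \<le> p \<Longrightarrow> fderivs hk a b i (sc c f) = sc c (fderivs hk a b i f)"
proof (induction i)
  case 0 thus ?case by (simp add: fderivs_0)
next
  case (Suc i)
  hence IH: "fderivs hk a b i (sc c f) = sc c (fderivs hk a b i f)" and ip: "i < p" by auto
  have D: "\<And>x. x \<in> {a..b} \<Longrightarrow> \<exists>L. has_fderiv hk a b (fderivs hk a b i f) L x"
    using f ip by (simp add: fCp_space_def)
  have g: "\<And>t. t \<in> {a..b} \<Longrightarrow> fuzzy_number (fderivs hk a b i f t)" using fCp_fuzzy[OF f ab] ip by simp
  show ?case unfolding fderivs_Suc IH by (rule fderiv_fun_sc[OF ab c g D])
qed

lemma fadd_fzero: "fadd fzero fzero = fzero"
proof
  fix x
  have bdd: "bdd_above (range (\<lambda>y. min (fzero y) (fzero (x - y))))" by (rule fadd_bdd[OF fzero_fuzzy])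
  show "fadd fzero fzero x = fzero x"
  proof (rule antisym)
    show "fadd fzero fzero x \<le> fzero x" unfolding fadd_def
      by (rule cSUP_least) (auto simp: fzero_def)
    have "min (fzero 0) (fzero (x - 0)) \<le> fadd fzero fzero x" unfolding fadd_def
      by (rule cSUP_upper[OF _ bdd]) simp
    thus "fzero x \<le> fadd fzero fzero x" by (simp add: fzero_def)
  qed
qed

lemma hdiff_fzero: "hdiff_exists fzero fzero" "hdiff fzero fzero = fzero"
  using hdiff_unique[OF fzero_fuzzy fzero_fuzzy fadd_fzero[symmetric]] fadd_fzero fzero_fuzzy
  by (auto simp: hdiff_exists_def)

lemma hfc_zero: "has_fderiv_case True True a b (\<lambda>t. fzero) fzero x"
  unfolding has_fderiv_case_def
  by (auto simp: rquot_ok_def lquot_ok_def rquot_def lquot_def hdiff_fzero fsmul_fzero fD_self fzero_fuzzy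
           intro!: exI[of _ 1])

lemma has_fderiv_zero: "has_fderiv hk a b (\<lambda>t. fzero) fzero x"
  unfolding has_fderiv_def using hfc_zero[of a b x] by (cases hk) auto

lemma fderivs_zero:
  assumes ab: "a < b" shows "fderivs hk a b i (\<lambda>t. fzero) = (\<lambda>t. fzero)"
proof (induction i)
  case 0 thus ?case by (simp add: fderivs_0)
next
  case (Suc i)
  have "fderiv_fun hk a b (\<lambda>t. fzero) = (\<lambda>t. fzero)"
  proof
    fix t show "fderiv_fun hk a b (\<lambda>t. fzero) t = fzero"
    proof (cases "t \<in> {a..b}")
      case True
      have "(SOME L. has_fderiv hk a b (\<lambda>t. fzero) L t) = fzero"
      proof (rule some_equality)
        show "has_fderiv hk a b (\<lambda>t. fzero) fzero t" by (rule has_fderiv_zero)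
        fix L assume "has_fderiv hk a b (\<lambda>t. fzero) L t"
        note HL = this
        show "L = fzero"
        proof (rule has_fderiv_unique[where g="\<lambda>t. fzero" and L=L and L'=fzero and hk=hk and a=a and b=b and x=t])
          show "a < b" by (rule ab)
          show "\<And>t. t \<in> {a..b} \<Longrightarrow> fuzzy_number fzero" by (rule fzero_fuzzy)
          show "t \<in> {a..b}" using \<open>t \<in> {a..b}\<close> .
          show "has_fderiv hk a b (\<lambda>t. fzero) L t" by (rule HL)
          show "has_fderiv hk a b (\<lambda>t. fzero) fzero t" by (rule has_fderiv_zero)
        qed
      qed
      thus ?thesis using True by (simp add: fderiv_fun_def)
    next
      case False thus ?thesis by (auto simp: fderiv_fun_def)
    qed
  qed
  thus ?case using Suc by (simp add: fderivs_Suc)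
qed



lemma fD_fsmul_zero': "c > 0 \<Longrightarrow> fuzzy_number u \<Longrightarrow> fD (fsmul c u) fzero = c * fD u fzero"
  using fD_fsmul_zero[of c u] fD_sym[of fzero] by metis

lemma fcontP_sc:
  assumes c: "c > 0" and g: "\<And>t. t \<in> {a..b} \<Longrightarrow> fuzzy_number (G t)" and C: "fcontP a b G"
  shows "fcontP a b (sc c G)"
  unfolding fcontP_def
proof (intro ballI allI impI)
  fix x e :: real assume x: "x \<in> {a..b}" and e: "e > 0"
  have ec: "e / c > 0" using e c by simp
  obtain d where d: "d > 0" "\<forall>y\<in>{a..b}. \<bar>y - x\<bar> < d \<longrightarrow> fD (G y) (G x) < e / c"
    using C x ec unfolding fcontP_def by blast
  show "\<exists>d>0. \<forall>y\<in>{a..b}. \<bar>y - x\<bar> < d \<longrightarrow> fD (sc c G y) (sc c G x) < e"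
  proof (intro exI[of _ d] conjI ballI impI)
    fix y assume y: "y \<in> {a..b}" "\<bar>y - x\<bar> < d"
    have "fD (sc c G y) (sc c G x) = c * fD (G y) (G x)" using fD_fsmul[OF c g g] x y by simp
    also have "\<dots> < c * (e / c)" using d y c by (intro mult_strict_left_mono) auto
    also have "\<dots> = e" using c by simp
    finally show "fD (sc c G y) (sc c G x) < e" .
  qed (rule d(1))
qed

lemma fcont_sc:
  assumes c: "c > 0" and f: "f \<in> fcont_space a b"
  shows "sc c f \<in> fcont_space a b"
proof -
  have g: "\<And>t. t \<in> {a..b} \<Longrightarrow> fuzzy_number (f t)" using f by (simp add: fcont_space_iff)
  have 1: "\<forall>x\<in>{a..b}. fuzzy_number (sc c f x)" using fsmul_fuzzy[of c] c g by simp
  have 2: "\<forall>x. x \<notin> {a..b} \<longrightarrow> sc c f x = fzero" using f by (simp add: fcont_space_iff fsmul_fzero)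
  have "fcontP a b f" using f unfolding fcont_space_iff by blast
  have 3: "fcontP a b (sc c f)"
  proof (rule fcontP_sc[OF c])
    show "\<And>t. t \<in> {a..b} \<Longrightarrow> fuzzy_number (f t)" by (rule g)
    show "fcontP a b f" by fact
  qed
  show ?thesis unfolding fcont_space_iff using 1 2 3 by blast
qed

lemma fDstar_scale:
  assumes ab: "a < b" and c: "c > 0" and g: "\<And>t. t \<in> {a..b} \<Longrightarrow> fuzzy_number (G t)" and C: "fcontP a b G"
  shows "fDstar a b (\<lambda>t. fzero) (sc c G) = c * fDstar a b (\<lambda>t. fzero) G"
        "0 \<le> fDstar a b (\<lambda>t. fzero) G"
proof -
  have bdd: "bdd_above ((\<lambda>t. fD fzero (G t)) ` {a..b})" by (rule fcontP_bdd[OF g C])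
  have "fDstar a b (\<lambda>t. fzero) (sc c G) = (SUP t\<in>{a..b}. c * fD fzero (G t))"
    unfolding fDstar_def using fD_fsmul_zero[OF c g] by (intro SUP_cong) auto
  also have "\<dots> = c * fDstar a b (\<lambda>t. fzero) G" unfolding fDstar_def
    by (rule sup_scale[OF c _ bdd]) (use ab in simp)
  finally show "fDstar a b (\<lambda>t. fzero) (sc c G) = c * fDstar a b (\<lambda>t. fzero) G" .
  have "fD fzero (G a) \<le> fDstar a b (\<lambda>t. fzero) G" unfolding fDstar_def
    by (rule cSUP_upper[OF _ bdd]) (use ab in simp)
  moreover have "0 \<le> fD fzero (G a)" by (rule fD_nonneg[OF fzero_fuzzy g]) (use ab in simp)
  ultimately show "0 \<le> fDstar a b (\<lambda>t. fzero) G" by linarith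
qed

lemma fCp_sc:
  assumes ab: "a < b" and c: "c > 0" and f: "f \<in> fCp_space p hk a b"
  shows "sc c f \<in> fCp_space p hk a b"
proof -
  have f0: "f \<in> fcont_space a b" using f by (simp add: fCp_space_def)
  have 1: "sc c f \<in> fcont_space a b" by (rule fcont_sc[OF c f0])
  have 2: "\<exists>L. has_fderiv hk a b (fderivs hk a b i (sc c f)) L x" if i: "i < p" and x: "x \<in> {a..b}" for i x
  proof -
    have "\<exists>L. has_fderiv hk a b (fderivs hk a b i f) L x" using f i x unfolding fCp_space_def by blast
    then obtain L where L: "has_fderiv hk a b (fderivs hk a b i f) L x" by blast
    have g: "\<And>t. t \<in> {a..b} \<Longrightarrow> fuzzy_number (fderivs hk a b i f t)" using fCp_fuzzy[OF f ab] i by simp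
    have "has_fderiv hk a b (sc c (fderivs hk a b i f)) (fsmul c L) x"
      by (rule has_fderiv_sc[OF c _ x L]) (rule g)
    thus ?thesis using fderivs_sc[OF f ab c] i by auto
  qed
  have 3: "fderivs hk a b p (sc c f) \<in> fcont_space a b"
    using fderivs_sc[OF f ab c, of p] fcont_sc[OF c] f by (simp add: fCp_space_def)
  show ?thesis unfolding fCp_space_def using 1 2 3 by blast
qed

lemma fDpstar_scale:
  assumes ab: "a < b" and c: "c > 0" and f: "f \<in> fCp_space p hk a b"
  shows "fDpstar p hk a b (\<lambda>t. fzero) (sc c f) = c * fDpstar p hk a b (\<lambda>t. fzero) f"
        "0 \<le> fDpstar p hk a b (\<lambda>t. fzero) f"
proof -
  have S: "fDstar a b (\<lambda>t. fzero) (fderivs hk a b i (sc c f)) = c * fDstar a b (\<lambda>t. fzero) (fderivs hk a b i f)"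
      "0 \<le> fDstar a b (\<lambda>t. fzero) (fderivs hk a b i f)"
    if i: "i \<le> p" for i
  proof -
    have g: "\<And>t. t \<in> {a..b} \<Longrightarrow> fuzzy_number (fderivs hk a b i f t)" using fCp_fuzzy[OF f ab i] by simp
    note Z = fDstar_scale[OF ab c g fCp_cont[OF f ab i]]
    show "fDstar a b (\<lambda>t. fzero) (fderivs hk a b i (sc c f)) = c * fDstar a b (\<lambda>t. fzero) (fderivs hk a b i f)"
      using Z(1) fderivs_sc[OF f ab c i] by simp
    show "0 \<le> fDstar a b (\<lambda>t. fzero) (fderivs hk a b i f)" by (rule Z(2))
  qed
  show "fDpstar p hk a b (\<lambda>t. fzero) (sc c f) = c * fDpstar p hk a b (\<lambda>t. fzero) f"
    unfolding fDpstar_def fderivs_zero[OF ab] sum_distrib_left using S(1) by (intro sum.cong) auto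
  show "0 \<le> fDpstar p hk a b (\<lambda>t. fzero) f"
    unfolding fDpstar_def fderivs_zero[OF ab] using S(2) by (intro sum_nonneg) auto
qed

section \<open>Sequences\<close>

lemma fmu_scale:
  assumes c: "c > 0" and x: "\<And>n. fuzzy_number (x n)" and B: "bdd_above (range (\<lambda>n. fD fzero (x n)))"
  shows "fmu (\<lambda>n. fzero) (\<lambda>n. fsmul c (x n)) = c * fmu (\<lambda>n. fzero) x"
        "0 \<le> fmu (\<lambda>n. fzero) x"
proof -
  have "fmu (\<lambda>n. fzero) (\<lambda>n. fsmul c (x n)) = (SUP n. c * fD fzero (x n))"
    unfolding fmu_def using fD_fsmul_zero[OF c x] by simp
  also have "\<dots> = c * fmu (\<lambda>n. fzero) x" unfolding fmu_def by (rule sup_scale[OF c _ B]) simp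
  finally show "fmu (\<lambda>n. fzero) (\<lambda>n. fsmul c (x n)) = c * fmu (\<lambda>n. fzero) x" .
  have "fD fzero (x 0) \<le> fmu (\<lambda>n. fzero) x" unfolding fmu_def by (rule cSUP_upper[OF _ B]) simp
  thus "0 \<le> fmu (\<lambda>n. fzero) x" using fD_nonneg[OF fzero_fuzzy x, of 0] by linarith
qed

lemma tendsto_bdd:
  fixes f :: "nat \<Rightarrow> real"
  assumes "f \<longlonglongrightarrow> l" shows "bdd_above (range f)"
proof -
  have "Bseq f" using assms by (rule convergent_imp_Bseq[OF convergentI])
  then obtain K where "\<And>n. norm (f n) \<le> K" by (auto simp: Bseq_def)
  thus ?thesis by (intro bdd_aboveI2[of _ _ K]) (simp add: abs_le_iff)
qed

lemma fm_sc: "c > 0 \<Longrightarrow> x \<in> fm_space \<Longrightarrow> (\<lambda>n. fsmul c (x n)) \<in> fm_space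
     \<and> fmu (\<lambda>n. fzero) (\<lambda>n. fsmul c (x n)) = c * fmu (\<lambda>n. fzero) x \<and> 0 \<le> fmu (\<lambda>n. fzero) x"
proof -
  assume c: "c > 0" and x: "x \<in> fm_space"
  have f: "\<And>n. fuzzy_number (x n)" using x by (simp add: fm_space_def)
  obtain B where B: "\<And>n. fD (x n) fzero \<le> B" using x by (auto simp: fm_space_def)
  have bdd: "bdd_above (range (\<lambda>n. fD fzero (x n)))" using B fD_sym by (intro bdd_aboveI2[of _ _ B]) metis
  have "\<And>n. fD (fsmul c (x n)) fzero \<le> c * B" using B fD_fsmul_zero'[OF c f] c by (simp add: mult_left_mono)
  hence "(\<lambda>n. fsmul c (x n)) \<in> fm_space" using fsmul_fuzzy[of c] c f by (auto simp: fm_space_def)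
  thus ?thesis using fmu_scale[OF c f bdd] by blast
qed

lemma fc_sc: "c > 0 \<Longrightarrow> x \<in> fc_space \<Longrightarrow> (\<lambda>n. fsmul c (x n)) \<in> fc_space
     \<and> fmu (\<lambda>n. fzero) (\<lambda>n. fsmul c (x n)) = c * fmu (\<lambda>n. fzero) x \<and> 0 \<le> fmu (\<lambda>n. fzero) x"
proof -
  assume c: "c > 0" and x: "x \<in> fc_space"
  have f: "\<And>n. fuzzy_number (x n)" using x by (simp add: fc_space_def)
  obtain L where L: "fuzzy_number L" "(\<lambda>n. fD (x n) L) \<longlonglongrightarrow> 0" using x by (auto simp: fc_space_def)
  have "bdd_above (range (\<lambda>n. fD (x n) L))" by (rule tendsto_bdd[OF L(2)])
  then obtain K where K: "\<And>n. fD (x n) L \<le> K" by (auto simp: bdd_above_def)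
  have bdd: "bdd_above (range (\<lambda>n. fD fzero (x n)))"
  proof (intro bdd_aboveI2[of _ _ "fD fzero L + K"])
    fix n
    have "fD fzero (x n) \<le> fD fzero L + fD L (x n)" by (rule fD_tri[OF fzero_fuzzy L(1) f])
    thus "fD fzero (x n) \<le> fD fzero L + K" using K[of n] fD_sym[of L "x n"] by linarith
  qed
  have "(\<lambda>n. c * fD (x n) L) \<longlonglongrightarrow> 0" by (rule tendsto_mult_right_zero[OF L(2)])
  hence "(\<lambda>n. fD (fsmul c (x n)) (fsmul c L)) \<longlonglongrightarrow> 0" using fD_fsmul[OF c f L(1)] by simp
  hence "(\<lambda>n. fsmul c (x n)) \<in> fc_space" using fsmul_fuzzy[of c] c f L(1) by (auto simp: fc_space_def)
  thus ?thesis using fmu_scale[OF c f bdd] by blast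
qed

lemma fc0_sc: "c > 0 \<Longrightarrow> x \<in> fc0_space \<Longrightarrow> (\<lambda>n. fsmul c (x n)) \<in> fc0_space
     \<and> fmu (\<lambda>n. fzero) (\<lambda>n. fsmul c (x n)) = c * fmu (\<lambda>n. fzero) x \<and> 0 \<le> fmu (\<lambda>n. fzero) x"
proof -
  assume c: "c > 0" and x: "x \<in> fc0_space"
  have f: "\<And>n. fuzzy_number (x n)" using x by (simp add: fc0_space_def)
  have L: "(\<lambda>n. fD (x n) fzero) \<longlonglongrightarrow> 0" using x by (auto simp: fc0_space_def)
  have "bdd_above (range (\<lambda>n. fD (x n) fzero))" by (rule tendsto_bdd[OF L])
  hence bdd: "bdd_above (range (\<lambda>n. fD fzero (x n)))" using fD_sym[of fzero] by simp
  have "(\<lambda>n. c * fD (x n) fzero) \<longlonglongrightarrow> 0" by (rule tendsto_mult_right_zero[OF L])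
  hence "(\<lambda>n. fD (fsmul c (x n)) fzero) \<longlonglongrightarrow> 0" using fD_fsmul_zero'[OF c f] by simp
  hence "(\<lambda>n. fsmul c (x n)) \<in> fc0_space" using fsmul_fuzzy[of c] c f by (auto simp: fc0_space_def)
  thus ?thesis using fmu_scale[OF c f bdd] by blast
qed

lemma powr_scale:
  fixes c p t :: real
  assumes c: "c > 0" and p: "p \<ge> 1" and t: "t \<ge> 0"
  shows "(c powr p * t) powr (1 / p) = c * t powr (1 / p)"
proof -
  have "(c powr p * t) powr (1 / p) = (c powr p) powr (1 / p) * t powr (1 / p)"
    by (rule Transcendental.powr_mult)
  also have "(c powr p) powr (1 / p) = c" using c p by (simp add: powr_powr)
  finally show ?thesis .
qed

lemma flp_sc: "c > 0 \<Longrightarrow> 1 \<le> p \<Longrightarrow> x \<in> flp_space p \<Longrightarrow> (\<lambda>n. fsmul c (x n)) \<in> flp_space p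
     \<and> frho p (\<lambda>n. fzero) (\<lambda>n. fsmul c (x n)) = c * frho p (\<lambda>n. fzero) x \<and> 0 \<le> frho p (\<lambda>n. fzero) x"
proof -
  assume c: "c > 0" and p: "1 \<le> p" and x: "x \<in> flp_space p"
  have f: "\<And>n. fuzzy_number (x n)" using x by (simp add: flp_space_def)
  have S: "summable (\<lambda>n. fD (x n) fzero powr p)" using x by (simp add: flp_space_def)
  have e: "\<And>n. fD (fsmul c (x n)) fzero powr p = c powr p * fD (x n) fzero powr p"
    using fD_fsmul_zero'[OF c f] c fD_nonneg[OF f fzero_fuzzy] by (simp add: powr_mult)
  have "summable (\<lambda>n. fD (fsmul c (x n)) fzero powr p)" unfolding e by (rule summable_mult[OF S])
  hence mem: "(\<lambda>n. fsmul c (x n)) \<in> flp_space p" using fsmul_fuzzy[of c] c f by (auto simp: flp_space_def)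
  have e2: "\<And>n. fD fzero (fsmul c (x n)) powr p = c powr p * fD fzero (x n) powr p"
    using e fD_sym[of fzero] by metis
  have S2: "summable (\<lambda>n. fD fzero (x n) powr p)" using S fD_sym[of fzero] by simp
  have "frho p (\<lambda>n. fzero) (\<lambda>n. fsmul c (x n)) = (c powr p * (\<Sum>n. fD fzero (x n) powr p)) powr (1 / p)"
    unfolding frho_def e2 using suminf_mult[OF S2] by simp
  also have "\<dots> = c * frho p (\<lambda>n. fzero) x" unfolding frho_def
    by (rule powr_scale[OF c p suminf_nonneg[OF S2]]) simp
  finally show ?thesis using mem by (simp add: frho_def)
qed



lemma nn_cmult_ge: "c * integral\<^sup>N M f \<le> (\<integral>\<^sup>+x. c * f x \<partial>M)"
proof -
  have "c * integral\<^sup>N M f = (SUP g\<in>{g. simple_function M g \<and> g \<le> f}. c * integral\<^sup>S M g)"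
    unfolding nn_integral_def by (simp add: SUP_mult_left_ennreal)
  also have "\<dots> \<le> (\<integral>\<^sup>+x. c * f x \<partial>M)"
  proof (rule SUP_least)
    fix g assume "g \<in> {g. simple_function M g \<and> g \<le> f}"
    hence sg: "simple_function M g" and gf: "g \<le> f" by auto
    have sg': "simple_function M (\<lambda>x. c * g x)" by (intro simple_function_mult simple_function_const sg)
    have "c * integral\<^sup>S M g = integral\<^sup>S M (\<lambda>x. c * g x)" by (simp add: simple_integral_mult[OF sg])
    also have "\<dots> = (\<integral>\<^sup>+x. c * g x \<partial>M)" by (rule nn_integral_eq_simple_integral[OF sg', symmetric])
    also have "\<dots> \<le> (\<integral>\<^sup>+x. c * f x \<partial>M)"
      by (rule nn_integral_mono) (use gf in \<open>auto simp: le_fun_def intro: mult_left_mono\<close>)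
    finally show "c * integral\<^sup>S M g \<le> (\<integral>\<^sup>+x. c * f x \<partial>M)" .
  qed
  finally show ?thesis .
qed

lemma nn_cmult_any:
  fixes k :: real
  assumes k: "k > 0"
  shows "(\<integral>\<^sup>+x. ennreal k * f x \<partial>M) = ennreal k * integral\<^sup>N M f"
proof (rule antisym)
  show "ennreal k * integral\<^sup>N M f \<le> (\<integral>\<^sup>+x. ennreal k * f x \<partial>M)" by (rule nn_cmult_ge)
  have one: "ennreal (1 / k) * ennreal k = 1" using k by (simp add: ennreal_mult[symmetric])
  have "integral\<^sup>N M f = (\<integral>\<^sup>+x. ennreal (1 / k) * (ennreal k * f x) \<partial>M)"
    by (simp add: mult.assoc[symmetric] one)
  also have "\<dots> \<ge> ennreal (1 / k) * (\<integral>\<^sup>+x. ennreal k * f x \<partial>M)" by (rule nn_cmult_ge)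
  finally have "ennreal k * (ennreal (1 / k) * (\<integral>\<^sup>+x. ennreal k * f x \<partial>M)) \<le> ennreal k * integral\<^sup>N M f"
    by (rule mult_left_mono) simp
  moreover have "ennreal k * ennreal (1 / k) = 1" using one by (simp add: mult.commute)
  ultimately show "(\<integral>\<^sup>+x. ennreal k * f x \<partial>M) \<le> ennreal k * integral\<^sup>N M f"
    by (simp add: mult.assoc[symmetric])
qed

definition fLpN :: "real \<Rightarrow> real \<Rightarrow> real \<Rightarrow> (real \<Rightarrow> real \<Rightarrow> real) \<Rightarrow> real" where
  "fLpN a b p g = enn2real (\<integral>\<^sup>+ x. indicator {a..b} x * ennreal (fD fzero (g x) powr p) \<partial>lborel) powr (1 / p)"

lemma fLp_fuzzy_all: "g \<in> fLp_fun a b p \<Longrightarrow> fuzzy_number (g x)"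
  unfolding fLp_fun_def by (cases "x \<in> {a..b}") (auto simp: fzero_fuzzy)

lemma class_mem: "g \<in> fLp_fun a b p \<Longrightarrow> g \<in> fLp_class a b p g"
  unfolding fLp_class_def by simp

lemma rep_class:
  assumes "g \<in> fLp_fun a b p"
  shows "rep (fLp_class a b p g) \<in> fLp_fun a b p"
        "AE x in lborel. x \<in> {a..b} \<longrightarrow> rep (fLp_class a b p g) x = g x"
proof -
  have "rep (fLp_class a b p g) \<in> fLp_class a b p g"
    unfolding rep_def by (rule someI[where P="\<lambda>f. f \<in> fLp_class a b p g", OF class_mem[OF assms]])
  thus "rep (fLp_class a b p g) \<in> fLp_fun a b p"
        "AE x in lborel. x \<in> {a..b} \<longrightarrow> rep (fLp_class a b p g) x = g x"
    unfolding fLp_class_def by auto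
qed

lemma rep_space:
  assumes "X \<in> fLp_space a b p" shows "rep X \<in> fLp_fun a b p"
proof -
  obtain g where g: "g \<in> fLp_fun a b p" "X = fLp_class a b p g" using assms by (auto simp: fLp_space_def)
  thus ?thesis using rep_class(1)[OF g(1)] by simp
qed

lemma zero_Lp: "(\<lambda>t. fzero) \<in> fLp_fun a b p"
proof -
  have m: "\<And>r. r \<in> {0..1} \<Longrightarrow> (\<lambda>x. lo fzero r) \<in> borel_measurable lborel \<and> (\<lambda>x. up fzero r) \<in> borel_measurable lborel"
    by simp
  have "(\<integral>\<^sup>+ x. indicator {a..b} x * ennreal (fD fzero fzero powr p) \<partial>lborel) = 0"
    by (simp add: fD_self)
  thus ?thesis unfolding fLp_fun_def using fzero_fuzzy m by simp
qed

lemma fLpN_cong: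
  assumes "AE x in lborel. x \<in> {a..b} \<longrightarrow> g x = g' x"
  shows "fLpN a b p g = fLpN a b p g'"
proof -
  have "(\<integral>\<^sup>+ x. indicator {a..b} x * ennreal (fD fzero (g x) powr p) \<partial>lborel)
      = (\<integral>\<^sup>+ x. indicator {a..b} x * ennreal (fD fzero (g' x) powr p) \<partial>lborel)"
    by (rule nn_integral_cong_AE) (use assms in \<open>eventually_elim, auto simp: indicator_def\<close>)
  thus ?thesis by (simp add: fLpN_def)
qed

lemma fDp_zero:
  assumes "X \<in> fLp_space a b p"
  shows "fDp_fun a b p (rep (fLp_class a b p (\<lambda>t. fzero))) (rep X) = fLpN a b p (rep X)"
proof -
  have "(\<integral>\<^sup>+ x. indicator {a..b} x * ennreal (fD (rep (fLp_class a b p (\<lambda>t. fzero)) x) (rep X x) powr p) \<partial>lborel)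
      = (\<integral>\<^sup>+ x. indicator {a..b} x * ennreal (fD fzero (rep X x) powr p) \<partial>lborel)"
    by (rule nn_integral_cong_AE) (use rep_class(2)[OF zero_Lp, of a b p] in \<open>eventually_elim, auto simp: indicator_def\<close>)
  thus ?thesis by (simp add: fLpN_def fDp_fun_def)
qed

lemma fLp_sc:
  assumes c: "c > 0" and p: "1 \<le> p" and g: "g \<in> fLp_fun a b p"
  shows "sc c g \<in> fLp_fun a b p" "fLpN a b p (sc c g) = c * fLpN a b p g" "0 \<le> fLpN a b p g"
proof -
  have gf: "\<And>x. fuzzy_number (g x)" by (rule fLp_fuzzy_all[OF g])
  have I: "(\<integral>\<^sup>+ x. indicator {a..b} x * ennreal (fD (sc c g x) fzero powr p) \<partial>lborel)
      = ennreal (c powr p) * (\<integral>\<^sup>+ x. indicator {a..b} x * ennreal (fD (g x) fzero powr p) \<partial>lborel)"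
  proof -
    have e: "\<And>x. indicator {a..b} x * ennreal (fD (sc c g x) fzero powr p)
        = ennreal (c powr p) * (indicator {a..b} x * ennreal (fD (g x) fzero powr p))"
    proof -
      fix x
      have "fD (sc c g x) fzero powr p = c powr p * fD (g x) fzero powr p"
        using fD_fsmul_zero'[OF c gf] fD_nonneg[OF gf fzero_fuzzy] c by (simp add: powr_mult)
      hence "ennreal (fD (sc c g x) fzero powr p) = ennreal (c powr p) * ennreal (fD (g x) fzero powr p)"
        by (simp add: ennreal_mult)
      thus "indicator {a..b} x * ennreal (fD (sc c g x) fzero powr p)
        = ennreal (c powr p) * (indicator {a..b} x * ennreal (fD (g x) fzero powr p))"
        by (simp add: ac_simps)
    qed
    show ?thesis unfolding e by (rule nn_cmult_any) (use c in simp)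
  qed
  have fin: "(\<integral>\<^sup>+ x. indicator {a..b} x * ennreal (fD (g x) fzero powr p) \<partial>lborel) < \<infinity>"
    using g by (simp add: fLp_fun_def)
  have meas: "(\<lambda>x. lo (sc c g x) r) \<in> borel_measurable lborel \<and> (\<lambda>x. up (sc c g x) r) \<in> borel_measurable lborel"
    if r: "r \<in> {0..1}" for r
  proof -
    have "(\<lambda>x. lo (g x) r) \<in> borel_measurable lborel" "(\<lambda>x. up (g x) r) \<in> borel_measurable lborel"
      using g r by (auto simp: fLp_fun_def)
    moreover have "(\<lambda>x. lo (sc c g x) r) = (\<lambda>x. c * lo (g x) r)" "(\<lambda>x. up (sc c g x) r) = (\<lambda>x. c * up (g x) r)"
      using lo_fsmul_pos[OF c gf r] by auto
    ultimately show ?thesis by simp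
  qed
  have fuz: "\<forall>x\<in>{a..b}. fuzzy_number (sc c g x)" using fsmul_fuzzy[of c] c gf by simp
  have out: "\<forall>x. x \<notin> {a..b} \<longrightarrow> sc c g x = fzero" using g by (simp add: fLp_fun_def fsmul_fzero)
  have fin2: "(\<integral>\<^sup>+ x. indicator {a..b} x * ennreal (fD (sc c g x) fzero powr p) \<partial>lborel) < \<infinity>"
    unfolding I using fin by (simp add: ennreal_mult_less_top)
  show "sc c g \<in> fLp_fun a b p" unfolding fLp_fun_def using fuz out meas fin2 by blast
  have I2: "(\<integral>\<^sup>+ x. indicator {a..b} x * ennreal (fD fzero (sc c g x) powr p) \<partial>lborel)
      = ennreal (c powr p) * (\<integral>\<^sup>+ x. indicator {a..b} x * ennreal (fD fzero (g x) powr p) \<partial>lborel)"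
    using I fD_sym[of fzero] by simp
  have "fLpN a b p (sc c g) = (c powr p * enn2real (\<integral>\<^sup>+ x. indicator {a..b} x * ennreal (fD fzero (g x) powr p) \<partial>lborel)) powr (1 / p)"
    unfolding fLpN_def I2 by (simp add: enn2real_mult)
  also have "\<dots> = c * fLpN a b p g" unfolding fLpN_def by (rule powr_scale[OF c p]) simp
  finally show "fLpN a b p (sc c g) = c * fLpN a b p g" .
  show "0 \<le> fLpN a b p g" by (simp add: fLpN_def)
qed

lemma Lp_component:
  assumes c: "c > 0" and p: "1 \<le> p" and X: "X \<in> fLp_space a b p"
  shows "fLp_class a b p (sc c (rep X)) \<in> fLp_space a b p"
    "fDp_fun a b p (rep (fLp_class a b p (\<lambda>t. fzero))) (rep (fLp_class a b p (sc c (rep X))))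
       = c * fDp_fun a b p (rep (fLp_class a b p (\<lambda>t. fzero))) (rep X)"
    "0 \<le> fDp_fun a b p (rep (fLp_class a b p (\<lambda>t. fzero))) (rep X)"
proof -
  have r: "rep X \<in> fLp_fun a b p" by (rule rep_space[OF X])
  note S = fLp_sc[OF c p r]
  show mem: "fLp_class a b p (sc c (rep X)) \<in> fLp_space a b p" using S(1) by (simp add: fLp_space_def)
  have "fDp_fun a b p (rep (fLp_class a b p (\<lambda>t. fzero))) (rep (fLp_class a b p (sc c (rep X))))
       = fLpN a b p (rep (fLp_class a b p (sc c (rep X))))" by (rule fDp_zero[OF mem])
  also have "\<dots> = fLpN a b p (sc c (rep X))" by (rule fLpN_cong[OF rep_class(2)[OF S(1)]])
  also have "\<dots> = c * fLpN a b p (rep X)" by (rule S(2))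
  also have "\<dots> = c * fDp_fun a b p (rep (fLp_class a b p (\<lambda>t. fzero))) (rep X)" using fDp_zero[OF X] by simp
  finally show "fDp_fun a b p (rep (fLp_class a b p (\<lambda>t. fzero))) (rep (fLp_class a b p (sc c (rep X))))
       = c * fDp_fun a b p (rep (fLp_class a b p (\<lambda>t. fzero))) (rep X)" .
  show "0 \<le> fDp_fun a b p (rep (fLp_class a b p (\<lambda>t. fzero))) (rep X)" by (simp add: fDp_fun_def)
qed



lemma comp:
  assumes v: "bvalid B" and y: "y \<in> bcarrier B" and c: "c > 0"
  shows "bsmul B c y \<in> bcarrier B \<and> bdist B (bzero B) (bsmul B c y) = c * bdist B (bzero B) y
         \<and> 0 \<le> bdist B (bzero B) y"
proof (cases B)
  case SpRF
  then obtain u where u: "y = FNum u" "fuzzy_number u" using y by auto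
  show ?thesis using SpRF u fsmul_fuzzy[of c u] c fD_fsmul_zero[OF c u(2)] fD_nonneg[OF fzero_fuzzy u(2)]
    by simp
next
  case (SpC a b)
  then obtain f where f: "y = FFun f" "f \<in> fcont_space a b" using y by auto
  have ab: "a < b" using v SpC by simp
  have g: "\<And>t. t \<in> {a..b} \<Longrightarrow> fuzzy_number (f t)" using f(2) by (simp add: fcont_space_iff)
  have C: "fcontP a b f" using f(2) unfolding fcont_space_iff by blast
  show ?thesis using SpC f fcont_sc[OF c f(2)] fDstar_scale[OF ab c g C] by simp
next
  case (SpLp a b p)
  then obtain X where X: "y = FCls X" "X \<in> fLp_space a b p" using y by auto
  have p: "1 \<le> p" using v SpLp by simp
  show ?thesis using SpLp X Lp_component[OF c p X(2)] by simp
next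
  case (SpCp p hk a b)
  then obtain f where f: "y = FFun f" "f \<in> fCp_space p hk a b" using y by auto
  have ab: "a < b" using v SpCp by simp
  show ?thesis using SpCp f fCp_sc[OF ab c f(2)] fDpstar_scale[OF ab c f(2)] by simp
next
  case (Splp p)
  then obtain x where x: "y = FSeq x" "x \<in> flp_space p" using y by auto
  have p: "1 \<le> p" using v Splp by simp
  show ?thesis using Splp x flp_sc[OF c p x(2)] by simp
next
  case Spm
  then obtain x where x: "y = FSeq x" "x \<in> fm_space" using y by auto
  show ?thesis using Spm x fm_sc[OF c x(2)] by simp
next
  case Spc
  then obtain x where x: "y = FSeq x" "x \<in> fc_space" using y by auto
  show ?thesis using Spc x fc_sc[OF c x(2)] by simp
next
  case Spc0
  then obtain x where x: "y = FSeq x" "x \<in> fc0_space" using y by auto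
  show ?thesis using Spc0 x fc0_sc[OF c x(2)] by simp
qed

lemma bsmul_zero: "bsmul B 0 y = bzero B"
  by (cases B) (simp_all add: fsmul_def)

lemma Xsmul_nth: "i < length S \<Longrightarrow> Xsmul S c x ! i = bsmul (S ! i) c (x ! i)"
  by (simp add: Xsmul_def)

lemma Xsmul_length: "length (Xsmul S c x) = length S"
  by (simp add: Xsmul_def)

lemma Xzero_nth: "i < length S \<Longrightarrow> Xzero S ! i = bzero (S ! i)"
  by (simp add: Xzero_def)

lemma Xsmul_0: "Xsmul S 0 x = Xzero S"
  by (rule nth_equalityI) (simp_all add: Xsmul_length Xzero_def Xsmul_nth bsmul_zero)

lemma Xsmul_carrier:
  assumes "valid_spec S" "x \<in> Xcarrier S" "c > 0" shows "Xsmul S c x \<in> Xcarrier S"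
  using assms comp unfolding Xcarrier_def valid_spec_def by (auto simp: Xsmul_length Xsmul_nth)

lemma Xnorm_scale:
  assumes S: "valid_spec S" and x: "x \<in> Xcarrier S" and c: "c > 0"
  shows "Xnorm S (Xsmul S c x) = c * Xnorm S x" "0 \<le> Xnorm S x"
proof -
  have lp: "0 < length S" using S by (simp add: valid_spec_def)
  hence ne: "{..<length S} \<noteq> {}" by auto
  have C: "\<And>i. i < length S \<Longrightarrow> bsmul (S ! i) c (x ! i) \<in> bcarrier (S ! i) \<and>
      bdist (S ! i) (bzero (S ! i)) (bsmul (S ! i) c (x ! i)) = c * bdist (S ! i) (bzero (S ! i)) (x ! i)
      \<and> 0 \<le> bdist (S ! i) (bzero (S ! i)) (x ! i)"
    using comp S x c unfolding valid_spec_def Xcarrier_def by auto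
  have "Xnorm S (Xsmul S c x) = Max ((\<lambda>i. c * bdist (S ! i) (bzero (S ! i)) (x ! i)) ` {..<length S})"
    unfolding Xnorm_def Xdist_def using C by (intro arg_cong[where f=Max] image_cong) (auto simp: Xzero_nth Xsmul_nth)
  also have "\<dots> = Max ((\<lambda>t. c * t) ` ((\<lambda>i. bdist (S ! i) (bzero (S ! i)) (x ! i)) ` {..<length S}))"
    by (simp add: image_image)
  also have "\<dots> = c * Max ((\<lambda>i. bdist (S ! i) (bzero (S ! i)) (x ! i)) ` {..<length S})"
    by (rule mono_Max_commute[symmetric]) (use c ne in \<open>auto simp: mono_def\<close>)
  also have "\<dots> = c * Xnorm S x"
    unfolding Xnorm_def Xdist_def by (intro arg_cong[where f="\<lambda>t. c * t"] arg_cong[where f=Max] image_cong) (auto simp: Xzero_nth)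
  finally show "Xnorm S (Xsmul S c x) = c * Xnorm S x" .
  have "bdist (S ! 0) (bzero (S ! 0)) (x ! 0) \<le> Max ((\<lambda>i. bdist (S ! i) (bzero (S ! i)) (x ! i)) ` {..<length S})"
    by (rule Max_ge) (use ne in auto)
  moreover have "0 \<le> bdist (S ! 0) (bzero (S ! 0)) (x ! 0)" using C[OF lp] by blast
  moreover have "Xnorm S x = Max ((\<lambda>i. bdist (S ! i) (bzero (S ! i)) (x ! i)) ` {..<length S})"
    unfolding Xnorm_def Xdist_def by (intro arg_cong[where f=Max] image_cong) (auto simp: Xzero_nth)
  ultimately show "0 \<le> Xnorm S x" by linarith
qed

lemma abstract_bound:
  fixes C :: "'x set" and N :: "'x \<Rightarrow> real" and sm :: "real \<Rightarrow> 'x \<Rightarrow> 'x" and \<phi> :: "'x \<Rightarrow> real"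
  assumes cl: "\<And>c x. c > 0 \<Longrightarrow> x \<in> C \<Longrightarrow> sm c x \<in> C"
    and hom: "\<And>c x. c > 0 \<Longrightarrow> x \<in> C \<Longrightarrow> N (sm c x) = c * N x"
    and nn: "\<And>x. x \<in> C \<Longrightarrow> 0 \<le> N x"
    and phom: "\<And>c x. c > 0 \<Longrightarrow> x \<in> C \<Longrightarrow> \<phi> (sm c x) = c * \<phi> x"
    and pnn: "\<And>x. x \<in> C \<Longrightarrow> 0 \<le> \<phi> x"
  shows "(\<forall>e>0. \<exists>d>0. \<forall>x\<in>C. N x < d \<longrightarrow> \<phi> x < e) \<longleftrightarrow> (\<exists>M>0. \<forall>x\<in>C. \<phi> x \<le> M * N x)"
proof
  assume "\<exists>M>0. \<forall>x\<in>C. \<phi> x \<le> M * N x"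
  then obtain M where M: "M > 0" "\<And>x. x \<in> C \<Longrightarrow> \<phi> x \<le> M * N x" by blast
  show "\<forall>e>0. \<exists>d>0. \<forall>x\<in>C. N x < d \<longrightarrow> \<phi> x < e"
  proof (intro allI impI)
    fix e :: real assume e: "e > 0"
    show "\<exists>d>0. \<forall>x\<in>C. N x < d \<longrightarrow> \<phi> x < e"
    proof (intro exI[of _ "e / M"] conjI ballI impI)
      show "0 < e / M" using e M by simp
      fix x assume x: "x \<in> C" and n: "N x < e / M"
      have "M * N x < M * (e / M)" using n M by (intro mult_strict_left_mono) auto
      thus "\<phi> x < e" using M(2)[OF x] M(1) by simp
    qed
  qed
next
  assume H: "\<forall>e>0. \<exists>d>0. \<forall>x\<in>C. N x < d \<longrightarrow> \<phi> x < e"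
  then obtain d where d: "d > 0" "\<And>x. x \<in> C \<Longrightarrow> N x < d \<Longrightarrow> \<phi> x < 1"
    using zero_less_one by blast
  show "\<exists>M>0. \<forall>x\<in>C. \<phi> x \<le> M * N x"
  proof (intro exI[of _ "2 / d"] conjI ballI)
    show "0 < 2 / d" using d by simp
    fix x assume x: "x \<in> C"
    show "\<phi> x \<le> 2 / d * N x"
    proof (cases "N x = 0")
      case True
      have "\<phi> x \<le> 0"
      proof (rule ccontr)
        assume "\<not> \<phi> x \<le> 0"
        hence px: "\<phi> x > 0" by simp
        define k where "k = 1 / \<phi> x"
        have k: "k > 0" using px by (simp add: k_def)
        have "N (sm k x) = 0" using hom[OF k x] True by simp
        hence "\<phi> (sm k x) < 1" using d(2)[OF cl[OF k x]] d(1) by simp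
        moreover have "\<phi> (sm k x) = 1" using phom[OF k x] px by (simp add: k_def)
        ultimately show False by simp
      qed
      thus ?thesis using True by simp
    next
      case False
      hence nx: "N x > 0" using nn[OF x] by simp
      define k where "k = d / (2 * N x)"
      have k: "k > 0" using nx d by (simp add: k_def)
      have "N (sm k x) = d / 2" using hom[OF k x] nx by (simp add: k_def)
      hence "\<phi> (sm k x) < 1" using d(2)[OF cl[OF k x]] d(1) by simp
      hence "k * \<phi> x < 1" using phom[OF k x] by simp
      hence "\<phi> x < 1 / k" using k by (simp add: field_simps)
      also have "1 / k = 2 / d * N x" using nx d by (simp add: k_def)
      finally show ?thesis by simp
    qed
  qed
qed

theorem theorem3p2:
  fixes S :: "bspace list"
  assumes "valid_spec S"
  shows "(\<forall>A :: felem list \<Rightarrow> real. lin_functional S A \<longrightarrow>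
            (cont0_functional S A \<longleftrightarrow> (\<exists>M>0. \<forall>x\<in>Xcarrier S. \<bar>A x\<bar> \<le> M * Xnorm S x)))
       \<and> (\<forall>A :: felem list \<Rightarrow> felem list. lin_operator S A \<longrightarrow>
            (cont0_operator S A \<longleftrightarrow> (\<exists>M>0. \<forall>x\<in>Xcarrier S. Xnorm S (A x) \<le> M * Xnorm S x)))"
proof (intro conjI allI impI)
  note cl = Xsmul_carrier[OF assms] and hom = Xnorm_scale(1)[OF assms] and nn = Xnorm_scale(2)[OF assms _ zero_less_one]
  fix A :: "felem list \<Rightarrow> real" assume lin: "lin_functional S A"
  have z: "A (Xzero S) = 0" if "x \<in> Xcarrier S" for x
  proof -
    have "A (Xsmul S 0 x) = 0 * A x" using lin that unfolding lin_functional_def by blast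
    thus ?thesis by (simp add: Xsmul_0)
  qed
  have "cont0_functional S A \<longleftrightarrow> (\<forall>e>0. \<exists>d>0. \<forall>x\<in>Xcarrier S. Xnorm S x < d \<longrightarrow> \<bar>A x\<bar> < e)"
    unfolding cont0_functional_def Xnorm_def using z by simp
  also have "\<dots> \<longleftrightarrow> (\<exists>M>0. \<forall>x\<in>Xcarrier S. \<bar>A x\<bar> \<le> M * Xnorm S x)"
  proof (rule abstract_bound[where sm="Xsmul S"])
    show "\<And>c x. 0 < c \<Longrightarrow> x \<in> Xcarrier S \<Longrightarrow> Xsmul S c x \<in> Xcarrier S" by (rule cl)
    show "\<And>c x. 0 < c \<Longrightarrow> x \<in> Xcarrier S \<Longrightarrow> Xnorm S (Xsmul S c x) = c * Xnorm S x" by (rule hom)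
    show "\<And>x. x \<in> Xcarrier S \<Longrightarrow> 0 \<le> Xnorm S x" by (rule nn)
    show "\<And>c x. 0 < c \<Longrightarrow> x \<in> Xcarrier S \<Longrightarrow> \<bar>A (Xsmul S c x)\<bar> = c * \<bar>A x\<bar>"
      using lin unfolding lin_functional_def by (simp add: abs_mult)
  qed simp
  finally show "cont0_functional S A \<longleftrightarrow> (\<exists>M>0. \<forall>x\<in>Xcarrier S. \<bar>A x\<bar> \<le> M * Xnorm S x)" .
next
  note cl = Xsmul_carrier[OF assms] and hom = Xnorm_scale(1)[OF assms] and nn = Xnorm_scale(2)[OF assms _ zero_less_one]
  fix A :: "felem list \<Rightarrow> felem list" assume lin: "lin_operator S A"
  have z: "A (Xzero S) = Xzero S" if "x \<in> Xcarrier S" for x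
  proof -
    have "A (Xsmul S 0 x) = Xsmul S 0 (A x)" using lin that unfolding lin_operator_def by blast
    thus ?thesis by (simp add: Xsmul_0)
  qed
  have AC: "\<And>x. x \<in> Xcarrier S \<Longrightarrow> A x \<in> Xcarrier S" using lin by (simp add: lin_operator_def)
  have "cont0_operator S A \<longleftrightarrow> (\<forall>e>0. \<exists>d>0. \<forall>x\<in>Xcarrier S. Xnorm S x < d \<longrightarrow> Xnorm S (A x) < e)"
    unfolding cont0_operator_def Xnorm_def using z by simp
  also have "\<dots> \<longleftrightarrow> (\<exists>M>0. \<forall>x\<in>Xcarrier S. Xnorm S (A x) \<le> M * Xnorm S x)"
  proof (rule abstract_bound[where sm="Xsmul S"])
    show "\<And>c x. 0 < c \<Longrightarrow> x \<in> Xcarrier S \<Longrightarrow> Xsmul S c x \<in> Xcarrier S" by (rule cl)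
    show "\<And>c x. 0 < c \<Longrightarrow> x \<in> Xcarrier S \<Longrightarrow> Xnorm S (Xsmul S c x) = c * Xnorm S x" by (rule hom)
    show "\<And>x. x \<in> Xcarrier S \<Longrightarrow> 0 \<le> Xnorm S x" by (rule nn)
    show "\<And>c x. 0 < c \<Longrightarrow> x \<in> Xcarrier S \<Longrightarrow> Xnorm S (A (Xsmul S c x)) = c * Xnorm S (A x)"
      using lin AC hom unfolding lin_operator_def by simp
    show "\<And>x. x \<in> Xcarrier S \<Longrightarrow> 0 \<le> Xnorm S (A x)" using AC nn by simp
  qed
  finally show "cont0_operator S A \<longleftrightarrow> (\<exists>M>0. \<forall>x\<in>Xcarrier S. Xnorm S (A x) \<le> M * Xnorm S x)" .
qed


end
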